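(* Let $G$ be a finite group and $f \ge 0$. Call an irreducible representation $\lambda$ of $G$ $f$-smooth if $\sum_{g \in G} \left|\chi_\lambda(g)/d_\lambda\right|^4 \le f$. Let $\lambda,\mu,\lambda',\mu'$ be irreducible representations of $G$, and suppose $\lambda$ and $\mu$ are $f$-smooth. Then \[ P_{\rm coll}^{\lambda\otimes\mu,\lambda'\otimes\mu'} \le \frac{\max_\tau d_\tau}{\sqrt{|G|}}\sqrt{f}, \] where the maximum is over irreducible representations $\tau$ of $G$.
   Context: For irreps $\lambda,\mu,\tau$ of a finite group $G$, with characters $\chi$ and dimensions $d$, the natural distribution on irreps in $\lambda\otimes\mu$ is $P^{\lambda\otimes\mu}_\tau = \frac{d_\tau}{d_\lambda d_\mu}\langle \chi_\tau, \chi_\lambda\chi_\mu\rangle_G$, where $\langle \phi,\psi\rangle_G = \frac{1}{|G|}\sum_{g\in G}\phi(g)\psi(g)^*$. The collision probability is $P_{\rm coll}^{\lambda\otimes\mu,\lambda'\otimes\mu'} = \sum_\tau P^{\lambda\otimes\mu}_\tau P^{\lambda'\otimes\mu'}_\tau$, summing over all irreps $\tau$ of $G$. *)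

theory Defs
  imports "HOL-Algebra.Group" "Jordan_Normal_Form.Matrix"
begin

definition rep :: "('a, 'b) monoid_scheme \<Rightarrow> nat \<Rightarrow> ('a \<Rightarrow> complex mat) \<Rightarrow> bool" where
  "rep G d \<rho> \<longleftrightarrow>
     (\<forall>g \<in> carrier G. \<rho> g \<in> carrier_mat d d) \<and>
     \<rho> \<one>\<^bsub>G\<^esub> = 1\<^sub>m d \<and>
     (\<forall>g \<in> carrier G. \<forall>h \<in> carrier G. \<rho> (g \<otimes>\<^bsub>G\<^esub> h) = \<rho> g * \<rho> h)"

definition subspace_vec :: "nat \<Rightarrow> complex vec set \<Rightarrow> bool" where
  "subspace_vec d W \<longleftrightarrow> W \<subseteq> carrier_vec d \<and> 0\<^sub>v d \<in> W \<and>
     (\<forall>v \<in> W. \<forall>w \<in> W. v + w \<in> W) \<and> (\<forall>c. \<forall>v \<in> W. c \<cdot>\<^sub>v v \<in> W)"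

definition irrep :: "('a, 'b) monoid_scheme \<Rightarrow> nat \<Rightarrow> ('a \<Rightarrow> complex mat) \<Rightarrow> bool" where
  "irrep G d \<rho> \<longleftrightarrow> rep G d \<rho> \<and> d > 0 \<and>
     (\<forall>W. subspace_vec d W \<and> (\<forall>g \<in> carrier G. \<forall>v \<in> W. \<rho> g *\<^sub>v v \<in> W)
          \<longrightarrow> W = {0\<^sub>v d} \<or> W = carrier_vec d)"

definition mat_trace :: "complex mat \<Rightarrow> complex" where
  "mat_trace A = (\<Sum>i<dim_row A. A $$ (i, i))"

definition character :: "('a, 'b) monoid_scheme \<Rightarrow> ('a \<Rightarrow> complex mat) \<Rightarrow> 'a \<Rightarrow> complex" where
  "character G \<rho> = (\<lambda>g. if g \<in> carrier G then mat_trace (\<rho> g) else 0)"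

text \<open>The set of irreducible characters; summing over it = summing over irreps up to isomorphism.\<close>
definition irr_chars :: "('a, 'b) monoid_scheme \<Rightarrow> ('a \<Rightarrow> complex) set" where
  "irr_chars G = {character G \<rho> | d \<rho>. irrep G d \<rho>}"

definition char_dim :: "('a, 'b) monoid_scheme \<Rightarrow> ('a \<Rightarrow> complex) \<Rightarrow> real" where
  "char_dim G \<chi> = Re (\<chi> \<one>\<^bsub>G\<^esub>)"

definition class_inner :: "('a, 'b) monoid_scheme \<Rightarrow> ('a \<Rightarrow> complex) \<Rightarrow> ('a \<Rightarrow> complex) \<Rightarrow> complex" where
  "class_inner G \<phi> \<psi> = (\<Sum>g \<in> carrier G. \<phi> g * cnj (\<psi> g)) / of_nat (card (carrier G))"

text \<open>P^{lambda tensor mu}_tau, in terms of characters (the value is real; we take Re of the inner product).\<close>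
definition P_tensor :: "('a, 'b) monoid_scheme \<Rightarrow> ('a \<Rightarrow> complex) \<Rightarrow> ('a \<Rightarrow> complex) \<Rightarrow> ('a \<Rightarrow> complex) \<Rightarrow> real" where
  "P_tensor G \<chi>l \<chi>m \<chi>t =
     char_dim G \<chi>t / (char_dim G \<chi>l * char_dim G \<chi>m) *
     Re (class_inner G \<chi>t (\<lambda>g. \<chi>l g * \<chi>m g))"

definition P_coll :: "('a, 'b) monoid_scheme \<Rightarrow> ('a \<Rightarrow> complex) \<Rightarrow> ('a \<Rightarrow> complex) \<Rightarrow>
    ('a \<Rightarrow> complex) \<Rightarrow> ('a \<Rightarrow> complex) \<Rightarrow> real" where
  "P_coll G \<chi>l \<chi>m \<chi>l' \<chi>m' =
     (\<Sum>\<chi>t \<in> irr_chars G. P_tensor G \<chi>l \<chi>m \<chi>t * P_tensor G \<chi>l' \<chi>m' \<chi>t)"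

definition smooth :: "('a, 'b) monoid_scheme \<Rightarrow> real \<Rightarrow> nat \<Rightarrow> ('a \<Rightarrow> complex mat) \<Rightarrow> bool" where
  "smooth G f d \<rho> \<longleftrightarrow> (\<Sum>g \<in> carrier G. (cmod (character G \<rho> g / of_nat d)) ^ 4) \<le> f"

definition max_irrep_dim :: "('a, 'b) monoid_scheme \<Rightarrow> real" where
  "max_irrep_dim G = Max {real d | d. \<exists>\<rho>. irrep G d \<rho>}"

end

theory Submission
  imports Defs "Jordan_Normal_Form.Schur_Decomposition" "HOL-Algebra.Multiplicative_Group"
begin

lemma mat_trace_sum: "A \<in> carrier_mat n n \<Longrightarrow> mat_trace A = (\<Sum>i<n. A $$ (i,i))"
  unfolding mat_trace_def by auto

lemma mat_trace_mult_comm: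
  fixes A B :: "complex mat"
  assumes A: "A \<in> carrier_mat n m" and B: "B \<in> carrier_mat m n"
  shows "mat_trace (A * B) = mat_trace (B * A)"
proof -
  have "mat_trace (A * B) = (\<Sum>i<n. \<Sum>k<m. A $$ (i,k) * B $$ (k,i))"
    unfolding mat_trace_def using A B
    by (auto simp: scalar_prod_def intro!: sum.cong)
  also have "\<dots> = (\<Sum>k<m. \<Sum>i<n. B $$ (k,i) * A $$ (i,k))"
    by (subst sum.swap) (simp add: mult.commute)
  also have "\<dots> = mat_trace (B * A)"
    unfolding mat_trace_def using A B
    by (auto simp: scalar_prod_def intro!: sum.cong)
  finally show ?thesis .
qed

lemma mat_trace_similar:
  fixes B P Q :: "complex mat"
  assumes "B \<in> carrier_mat n n" "P \<in> carrier_mat n n" "Q \<in> carrier_mat n n" "Q * P = 1\<^sub>m n"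
  shows "mat_trace (P * B * Q) = mat_trace B"
proof -
  have "mat_trace (P * B * Q) = mat_trace (Q * (P * B))"
    by (rule mat_trace_mult_comm[of _ n n]) (use assms in auto)
  also have "Q * (P * B) = B" using assms by (simp add: assoc_mult_mat[symmetric])
  finally show ?thesis .
qed

lemma upper_tri_mult:
  fixes B C :: "complex mat"
  assumes B: "B \<in> carrier_mat n n" and C: "C \<in> carrier_mat n n"
    and uB: "upper_triangular B" and uC: "upper_triangular C"
  shows "upper_triangular (B * C) \<and> (\<forall>i<n. (B * C) $$ (i,i) = B $$ (i,i) * C $$ (i,i))"
proof -
  have Bz: "\<And>i j. i < n \<Longrightarrow> j < i \<Longrightarrow> B $$ (i,j) = 0" using uB B by (auto simp: upper_triangular_def)
  have Cz: "\<And>i j. i < n \<Longrightarrow> j < i \<Longrightarrow> C $$ (i,j) = 0" using uC C by (auto simp: upper_triangular_def)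
  have e: "\<And>i j. i < n \<Longrightarrow> j < n \<Longrightarrow> (B * C) $$ (i,j) = (\<Sum>k<n. B $$ (i,k) * C $$ (k,j))"
    using B C by (auto simp: scalar_prod_def intro!: sum.cong)
  have 1: "upper_triangular (B * C)"
    unfolding upper_triangular_def
  proof (intro allI impI)
    fix i j assume i: "i < dim_row (B * C)" and j: "j < i"
    have "(\<Sum>k<n. B $$ (i,k) * C $$ (k,j)) = 0"
    proof (rule sum.neutral, intro ballI)
      fix k assume k: "k \<in> {..<n}"
      show "B $$ (i,k) * C $$ (k,j) = 0"
      proof (cases "k < i")
        case True then show ?thesis using Bz[of i k] i B by auto
      next
        case False then show ?thesis using Cz[of k j] j k by auto
      qed
    qed
    then show "(B * C) $$ (i,j) = 0" using e[of i j] i j B by auto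
  qed
  have 2: "(B * C) $$ (i,i) = B $$ (i,i) * C $$ (i,i)" if i: "i < n" for i
  proof -
    have "(\<Sum>k<n. B $$ (i,k) * C $$ (k,i)) = B $$ (i,i) * C $$ (i,i) + (\<Sum>k\<in>{..<n}-{i}. B $$ (i,k) * C $$ (k,i))"
      using i by (subst sum.remove[of _ i]) auto
    also have "(\<Sum>k\<in>{..<n}-{i}. B $$ (i,k) * C $$ (k,i)) = 0"
    proof (rule sum.neutral, intro ballI)
      fix k assume k: "k \<in> {..<n}-{i}"
      show "B $$ (i,k) * C $$ (k,i) = 0"
      proof (cases "k < i")
        case True then show ?thesis using Bz[of i k] i by auto
      next
        case False then show ?thesis using Cz[of k i] k by auto
      qed
    qed
    finally show ?thesis using e[of i i] i by simp
  qed
  show ?thesis using 1 2 by auto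
qed


lemma triangularize:
  fixes A :: "complex mat"
  assumes A: "A \<in> carrier_mat n n"
  shows "\<exists>B P Q. B \<in> carrier_mat n n \<and> P \<in> carrier_mat n n \<and> Q \<in> carrier_mat n n \<and>
    P * Q = 1\<^sub>m n \<and> Q * P = 1\<^sub>m n \<and> A = P * B * Q \<and> upper_triangular B"
proof -
  obtain es where es: "char_poly A = (\<Prod>a\<leftarrow>es. [:- a, 1:])" using char_poly_factorized[OF A] by auto
  obtain B P Q where s: "schur_decomposition A es = (B,P,Q)" by (cases "schur_decomposition A es") auto
  from schur_decomposition[OF A es s] have w: "similar_mat_wit A B P Q" and u: "upper_triangular B" by auto
  from similar_mat_witD2[OF A w] u show ?thesis by blast
qed

lemma upper_tri_pow:
  fixes B :: "complex mat"
  assumes B: "B \<in> carrier_mat n n" and uB: "upper_triangular B"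
  shows "upper_triangular (B ^\<^sub>m k) \<and> (\<forall>i<n. (B ^\<^sub>m k) $$ (i,i) = (B $$ (i,i)) ^ k)"
proof (induction k)
  case 0 then show ?case using B by auto
next
  case (Suc k)
  have "upper_triangular (B ^\<^sub>m k * B) \<and> (\<forall>i<n. (B ^\<^sub>m k * B) $$ (i,i) = (B ^\<^sub>m k) $$ (i,i) * B $$ (i,i))"
    by (rule upper_tri_mult) (use B uB Suc in auto)
  then show ?case using Suc by (auto simp: mult.commute)
qed

lemma idempotent_trace:
  fixes A :: "complex mat"
  assumes A: "A \<in> carrier_mat n n" and idem: "A * A = A"
  shows "\<exists>k. k \<le> n \<and> mat_trace A = of_nat k"
proof -
  obtain B P Q where B: "B \<in> carrier_mat n n" and P: "P \<in> carrier_mat n n" and Q: "Q \<in> carrier_mat n n"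
    and PQ: "P * Q = 1\<^sub>m n" and QP: "Q * P = 1\<^sub>m n" and AB: "A = P * B * Q" and uB: "upper_triangular B"
    using triangularize[OF A] by blast
  have BA: "B = Q * A * P"
  proof -
    have "Q * A * P = Q * (P * B * Q) * P" using AB by simp
    also have "\<dots> = (Q * P) * B * (Q * P)" using B P Q by (simp add: assoc_mult_mat[of _ n n _ n _ n] mult_carrier_mat[of _ n n _ n])
    finally show ?thesis using QP B by simp
  qed
  have BB: "B * B = B"
  proof -
    have "B * B = Q * A * (P * Q) * A * P" using BA B P Q A by (simp add: assoc_mult_mat[of _ n n _ n _ n] mult_carrier_mat[of _ n n _ n])
    also have "\<dots> = Q * (A * A) * P" using PQ A P Q by (simp add: assoc_mult_mat[of _ n n _ n _ n] mult_carrier_mat[of _ n n _ n])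
    finally show ?thesis using idem BA by simp
  qed
  have d: "\<And>i. i < n \<Longrightarrow> B $$ (i,i) * B $$ (i,i) = B $$ (i,i)"
    using upper_tri_mult[OF B B uB uB] BB by metis
  have d01: "\<And>i. i < n \<Longrightarrow> B $$ (i,i) = 0 \<or> B $$ (i,i) = 1"
  proof -
    fix i assume i: "i < n"
    have "B $$ (i,i) * (B $$ (i,i) - 1) = 0" using d[OF i] by (simp add: algebra_simps)
    then show "B $$ (i,i) = 0 \<or> B $$ (i,i) = 1" by auto
  qed
  have "mat_trace A = mat_trace B" using AB mat_trace_similar[OF B P Q QP] by simp
  also have "\<dots> = (\<Sum>i<n. B $$ (i,i))" using B by (simp add: mat_trace_sum)
  also have "\<dots> = (\<Sum>i\<in>{i. i<n \<and> B $$ (i,i) = 1}. 1)"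
    by (rule sum.mono_neutral_cong_right) (use d01 in auto)
  also have "\<dots> = of_nat (card {i. i<n \<and> B $$ (i,i) = 1})" by simp
  finally show ?thesis by (intro exI[of _ "card {i. i<n \<and> B $$ (i,i) = 1}"]) (auto intro: card_mono[of "{..<n}", simplified])
qed

lemma root_unity_trace:
  fixes A :: "complex mat"
  assumes A: "A \<in> carrier_mat n n" and k: "k > 0" and Ak: "A ^\<^sub>m k = 1\<^sub>m n"
  shows "mat_trace (A ^\<^sub>m (k - 1)) = cnj (mat_trace A)"
proof -
  obtain B P Q where B: "B \<in> carrier_mat n n" and P: "P \<in> carrier_mat n n" and Q: "Q \<in> carrier_mat n n"
    and PQ: "P * Q = 1\<^sub>m n" and QP: "Q * P = 1\<^sub>m n" and AB: "A = P * B * Q" and uB: "upper_triangular B"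
    using triangularize[OF A] by blast
  have w: "similar_mat_wit A B P Q" unfolding similar_mat_wit_def Let_def using A B P Q PQ QP AB by auto
  have pw: "\<And>j. A ^\<^sub>m j = P * B ^\<^sub>m j * Q" by (rule similar_mat_wit_pow_id[OF w])
  have Bk: "B ^\<^sub>m k = 1\<^sub>m n"
  proof -
    have "Q * (A ^\<^sub>m k) * P = (Q * P) * B ^\<^sub>m k * (Q * P)" using pw[of k] B P Q by (simp add: assoc_mult_mat[of _ n n _ n _ n] mult_carrier_mat[of _ n n _ n])
    then show ?thesis using Ak QP P Q B by simp
  qed
  have diag: "\<And>i. i < n \<Longrightarrow> (B $$ (i,i)) ^ k = 1"
    using upper_tri_pow[OF B uB, of k] Bk by auto
  have cn: "\<And>i. i < n \<Longrightarrow> (B $$ (i,i)) ^ (k - 1) = cnj (B $$ (i,i))"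
  proof -
    fix i assume i: "i < n"
    let ?b = "B $$ (i,i)"
    have "cmod ?b ^ k = 1" using diag[OF i] by (metis norm_one norm_power)
    then have nb: "cmod ?b = 1" using k power_eq_imp_eq_base[of "cmod ?b" k 1] by simp
    have "?b * cnj ?b = 1" using complex_norm_square[of ?b] nb by simp
    moreover have "?b * ?b ^ (k - 1) = ?b ^ k" using k by (cases k) auto
    ultimately have "?b * cnj ?b = 1" "?b * ?b ^ (k - 1) = 1" using diag[OF i] by auto
    then show "?b ^ (k - 1) = cnj ?b"
      using inverse_unique[of ?b] by metis
  qed
  have "mat_trace (A ^\<^sub>m (k - 1)) = mat_trace (B ^\<^sub>m (k - 1))"
    using pw[of "k-1"] mat_trace_similar[of "B ^\<^sub>m (k-1)" n P Q] B P Q QP by simp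
  also have "\<dots> = (\<Sum>i<n. (B $$ (i,i)) ^ (k - 1))"
    using upper_tri_pow[OF B uB, of "k-1"] mat_trace_sum[OF pow_carrier_mat[OF B, of "k-1"]] by simp
  also have "\<dots> = (\<Sum>i<n. cnj (B $$ (i,i)))" using cn by simp
  also have "\<dots> = cnj (mat_trace B)" using B by (simp add: mat_trace_sum)
  also have "mat_trace B = mat_trace A" using AB mat_trace_similar[OF B P Q QP] by simp
  finally show ?thesis .
qed


lemma exists_eigen:
  fixes T :: "complex mat"
  assumes T: "T \<in> carrier_mat b b" and b: "b > 0"
  shows "\<exists>a v. v \<in> carrier_vec b \<and> v \<noteq> 0\<^sub>v b \<and> T *\<^sub>v v = a \<cdot>\<^sub>v v"
proof -
  obtain as where cp: "char_poly T = (\<Prod>a\<leftarrow>as. [:- a, 1:])" and l: "length as = b"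
    using char_poly_factorized[OF T] by auto
  then obtain a where a: "a \<in> set as" using b by (cases as) auto
  have "poly (char_poly T) a = 0" unfolding cp poly_prod_list
    using a by (auto simp: prod_list_zero_iff)
  then have "eigenvalue T a" using eigenvalue_root_char_poly[OF T] by simp
  then show ?thesis unfolding eigenvalue_def eigenvector_def using T by auto
qed

context
  fixes G :: "('a, 'b) monoid_scheme" (structure)
  assumes grp: "group G" and fin: "finite (carrier G)"
begin

interpretation group G by (rule grp)

lemma rep_carrier: "rep G d \<rho> \<Longrightarrow> g \<in> carrier G \<Longrightarrow> \<rho> g \<in> carrier_mat d d"
  unfolding rep_def by auto

lemma rep_one: "rep G d \<rho> \<Longrightarrow> \<rho> \<one> = 1\<^sub>m d"
  unfolding rep_def by auto

lemma rep_mult: "rep G d \<rho> \<Longrightarrow> g \<in> carrier G \<Longrightarrow> h \<in> carrier G \<Longrightarrow> \<rho> (g \<otimes> h) = \<rho> g * \<rho> h"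
  unfolding rep_def by auto

lemma rep_inv1: assumes "rep G d \<rho>" "g \<in> carrier G" shows "\<rho> (inv g) * \<rho> g = 1\<^sub>m d"
  using rep_mult[OF assms(1), of "inv g" g] rep_one[OF assms(1)] assms(2) by simp

lemma rep_inv2: assumes "rep G d \<rho>" "g \<in> carrier G" shows "\<rho> g * \<rho> (inv g) = 1\<^sub>m d"
  using rep_mult[OF assms(1), of g "inv g"] rep_one[OF assms(1)] assms(2) by simp

lemma rep_pow: assumes r: "rep G d \<rho>" and g: "g \<in> carrier G"
  shows "\<rho> (g [^] (j::nat)) = \<rho> g ^\<^sub>m j"
proof (induction j)
  case 0 then show ?case using rep_one[OF r] rep_carrier[OF r g] by simp
next
  case (Suc j)
  have "\<rho> (g [^] Suc j) = \<rho> (g [^] j \<otimes> g)" by simp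
  also have "\<dots> = \<rho> (g [^] j) * \<rho> g" using rep_mult[OF r] g by simp
  finally show ?case using Suc by simp
qed

lemma character_in: "g \<in> carrier G \<Longrightarrow> character G \<rho> g = mat_trace (\<rho> g)"
  unfolding character_def by simp

lemma character_one: "rep G d \<rho> \<Longrightarrow> character G \<rho> \<one> = of_nat d"
  using rep_one[of d \<rho>] by (simp add: character_def mat_trace_def)

lemma char_inv:
  assumes r: "rep G d \<rho>" and g: "g \<in> carrier G"
  shows "character G \<rho> (inv g) = cnj (character G \<rho> g)"
proof -
  let ?k = "Coset.order G"
  have k: "?k > 0" using fin g unfolding Coset.order_def by (auto simp: card_gt_0_iff)
  have gk: "g [^] ?k = \<one>" using pow_order_eq_1[OF g] .
  have "g [^] (?k - 1) \<otimes> g = g [^] ?k"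
    using k g by (metis Suc_diff_1 nat_pow_Suc)
  then have ig: "inv g = g [^] (?k - 1)" using gk g by (metis inv_equality nat_pow_closed)
  have "\<rho> g ^\<^sub>m ?k = 1\<^sub>m d" using rep_pow[OF r g, of ?k] gk rep_one[OF r] by simp
  then have "mat_trace (\<rho> g ^\<^sub>m (?k - 1)) = cnj (mat_trace (\<rho> g))"
    using root_unity_trace[OF rep_carrier[OF r g] k] by simp
  then show ?thesis using ig rep_pow[OF r g] g by (simp add: character_in)
qed

lemma schur_kernel:
  assumes irr: "irrep G c \<sigma>" and r: "rep G b \<tau>" and T: "T \<in> carrier_mat b c"
    and int: "\<And>h. h \<in> carrier G \<Longrightarrow> \<tau> h * T = T * \<sigma> h"
    and nz: "T \<noteq> 0\<^sub>m b c" and v: "v \<in> carrier_vec c" and Tv: "T *\<^sub>v v = 0\<^sub>v b"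
  shows "v = 0\<^sub>v c"
proof -
  let ?W = "{v \<in> carrier_vec c. T *\<^sub>v v = 0\<^sub>v b}"
  have rs: "rep G c \<sigma>" using irr unfolding irrep_def by auto
  have sub: "subspace_vec c ?W"
    unfolding subspace_vec_def
  proof (intro conjI ballI allI)
    show "?W \<subseteq> carrier_vec c" by auto
    show "0\<^sub>v c \<in> ?W" using T by (auto intro!: eq_vecI)
  next
    fix v w assume "v \<in> ?W" "w \<in> ?W"
    then show "v + w \<in> ?W" using T by (auto simp: mult_add_distrib_mat_vec[OF T])
  next
    fix a v assume "v \<in> ?W"
    then show "a \<cdot>\<^sub>v v \<in> ?W" using T by (auto simp: mult_mat_vec[OF T])
  qed
  have inv: "\<forall>h \<in> carrier G. \<forall>v \<in> ?W. \<sigma> h *\<^sub>v v \<in> ?W"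
  proof (intro ballI)
    fix h v assume h: "h \<in> carrier G" and v: "v \<in> ?W"
    have sh: "\<sigma> h \<in> carrier_mat c c" using rep_carrier[OF rs h] .
    have th: "\<tau> h \<in> carrier_mat b b" using rep_carrier[OF r h] .
    have "T *\<^sub>v (\<sigma> h *\<^sub>v v) = (T * \<sigma> h) *\<^sub>v v" using T sh v by simp
    also have "\<dots> = (\<tau> h * T) *\<^sub>v v" using int[OF h] by simp
    also have "\<dots> = \<tau> h *\<^sub>v (T *\<^sub>v v)" using T th v by simp
    also have "\<dots> = 0\<^sub>v b" using v th by (auto intro!: eq_vecI)
    finally show "\<sigma> h *\<^sub>v v \<in> ?W" using sh v by auto
  qed
  have "?W = {0\<^sub>v c} \<or> ?W = carrier_vec c" using irr sub inv unfolding irrep_def by blast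
  moreover have "?W \<noteq> carrier_vec c"
  proof
    assume W: "?W = carrier_vec c"
    have "T = 0\<^sub>m b c"
    proof (rule eq_matI)
      fix i j assume i: "i < dim_row (0\<^sub>m b c)" and j: "j < dim_col (0\<^sub>m b c)"
      have "unit_vec c j \<in> ?W" using W j by auto
      then have "(T *\<^sub>v unit_vec c j) $ i = 0" using i by auto
      then show "T $$ (i,j) = 0\<^sub>m b c $$ (i,j)" using i j T by auto
    qed (use T in auto)
    with nz show False by simp
  qed
  ultimately show ?thesis using v Tv by auto
qed

lemma schur_scalar:
  assumes irr: "irrep G b \<tau>" and T: "T \<in> carrier_mat b b"
    and int: "\<And>h. h \<in> carrier G \<Longrightarrow> \<tau> h * T = T * \<tau> h"
  shows "\<exists>a. T = a \<cdot>\<^sub>m 1\<^sub>m b"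
proof -
  have r: "rep G b \<tau>" and b: "b > 0" using irr unfolding irrep_def by auto
  obtain a v where v: "v \<in> carrier_vec b" "v \<noteq> 0\<^sub>v b" and Tv: "T *\<^sub>v v = a \<cdot>\<^sub>v v"
    using exists_eigen[OF T b] by auto
  let ?S = "T - a \<cdot>\<^sub>m 1\<^sub>m b"
  have S: "?S \<in> carrier_mat b b" using T by auto
  have S0: "?S = 0\<^sub>m b b"
  proof (rule ccontr)
    assume nz: "?S \<noteq> 0\<^sub>m b b"
    have int2: "\<tau> h * ?S = ?S * \<tau> h" if h: "h \<in> carrier G" for h
    proof -
      have th: "\<tau> h \<in> carrier_mat b b" using rep_carrier[OF r h] .
      have c1: "\<tau> h * (a \<cdot>\<^sub>m 1\<^sub>m b) = (a \<cdot>\<^sub>m 1\<^sub>m b) * \<tau> h"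
        using th by (simp add: mult_smult_distrib[OF th, of "1\<^sub>m b" b] mult_smult_assoc_mat[of "1\<^sub>m b" b b "\<tau> h" b])
      have "\<tau> h * ?S = \<tau> h * T - \<tau> h * (a \<cdot>\<^sub>m 1\<^sub>m b)" using th T by (simp add: mult_minus_distrib_mat)
      also have "\<dots> = T * \<tau> h - (a \<cdot>\<^sub>m 1\<^sub>m b) * \<tau> h" using c1 int[OF h] by simp
      also have "\<dots> = ?S * \<tau> h" using th T by (simp add: minus_mult_distrib_mat)
      finally show ?thesis .
    qed
    have e1: "(a \<cdot>\<^sub>m 1\<^sub>m b) *\<^sub>v v = a \<cdot>\<^sub>v (1\<^sub>m b *\<^sub>v v)" using v by auto
    have "?S *\<^sub>v v = 0\<^sub>v b" using T v Tv e1 by (simp add: minus_mult_distrib_mat_vec)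
    then have "v = 0\<^sub>v b" using schur_kernel[OF irr r S int2 nz v(1)] by simp
    with v show False by simp
  qed
  have "T = a \<cdot>\<^sub>m 1\<^sub>m b"
  proof (rule eq_matI)
    fix i j assume i: "i < dim_row (a \<cdot>\<^sub>m 1\<^sub>m b)" and j: "j < dim_col (a \<cdot>\<^sub>m 1\<^sub>m b)"
    have "?S $$ (i,j) = 0" using S0 i j by simp
    then show "T $$ (i,j) = (a \<cdot>\<^sub>m 1\<^sub>m b) $$ (i,j)" using i j T by simp
  qed (use T in auto)
  then show ?thesis by blast
qed

end

lemma mult_entry: "A \<in> carrier_mat a b \<Longrightarrow> B \<in> carrier_mat b c \<Longrightarrow> i < a \<Longrightarrow> l < c \<Longrightarrow>
  (A * B) $$ (i,l) = (\<Sum>p<b. A $$ (i,p) * B $$ (p,l))"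
  by (auto simp: scalar_prod_def intro!: sum.cong)

definition msum :: "nat \<Rightarrow> nat \<Rightarrow> ('x \<Rightarrow> complex mat) \<Rightarrow> 'x set \<Rightarrow> complex mat" where
  "msum a c M S = mat a c (\<lambda>(i,l). \<Sum>g\<in>S. M g $$ (i,l))"

lemma msum_carrier[simp]: "msum a c M S \<in> carrier_mat a c"
  unfolding msum_def by simp

lemma msum_dim[simp]: "dim_row (msum a c M S) = a" "dim_col (msum a c M S) = c"
  unfolding msum_def by simp_all

lemma msum_index[simp]: "i < a \<Longrightarrow> l < c \<Longrightarrow> msum a c M S $$ (i,l) = (\<Sum>g\<in>S. M g $$ (i,l))"
  unfolding msum_def by simp

lemma msum_mult_left:
  assumes A: "A \<in> carrier_mat a b" and M: "\<And>g. g \<in> S \<Longrightarrow> M g \<in> carrier_mat b c"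
  shows "A * msum b c M S = msum a c (\<lambda>g. A * M g) S"
proof (rule eq_matI)
  fix i l assume i: "i < dim_row (msum a c (\<lambda>g. A * M g) S)" and l: "l < dim_col (msum a c (\<lambda>g. A * M g) S)"
  then have i: "i < a" and l: "l < c" by auto
  have "(A * msum b c M S) $$ (i,l) = (\<Sum>p<b. A $$ (i,p) * (\<Sum>g\<in>S. M g $$ (p,l)))"
    using A i l by (auto simp: scalar_prod_def intro!: sum.cong)
  also have "\<dots> = (\<Sum>g\<in>S. \<Sum>p<b. A $$ (i,p) * M g $$ (p,l))"
    by (simp add: sum_distrib_left sum.swap[of _ S])
  also have "\<dots> = (\<Sum>g\<in>S. (A * M g) $$ (i,l))"
    by (rule sum.cong[OF refl], rule mult_entry[OF A M i l, symmetric])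
  finally show "(A * msum b c M S) $$ (i,l) = msum a c (\<lambda>g. A * M g) S $$ (i,l)" using i l by simp
qed (use A in auto)

lemma msum_mult_right:
  assumes A: "A \<in> carrier_mat c d" and M: "\<And>g. g \<in> S \<Longrightarrow> M g \<in> carrier_mat b c"
  shows "msum b c M S * A = msum b d (\<lambda>g. M g * A) S"
proof (rule eq_matI)
  fix i l assume i: "i < dim_row (msum b d (\<lambda>g. M g * A) S)" and l: "l < dim_col (msum b d (\<lambda>g. M g * A) S)"
  then have i: "i < b" and l: "l < d" by auto
  have "(msum b c M S * A) $$ (i,l) = (\<Sum>p<c. (\<Sum>g\<in>S. M g $$ (i,p)) * A $$ (p,l))"
    using A i l by (auto simp: scalar_prod_def intro!: sum.cong)
  also have "\<dots> = (\<Sum>g\<in>S. \<Sum>p<c. M g $$ (i,p) * A $$ (p,l))"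
    by (simp add: sum_distrib_right sum.swap[of _ S])
  also have "\<dots> = (\<Sum>g\<in>S. (M g * A) $$ (i,l))"
    by (rule sum.cong[OF refl], rule mult_entry[OF M A i l, symmetric])
  finally show "(msum b c M S * A) $$ (i,l) = msum b d (\<lambda>g. M g * A) S $$ (i,l)" using i l by simp
qed (use A in auto)

lemma msum_trace:
  "mat_trace (msum a a M S) = (\<Sum>g\<in>S. mat_trace (M g))" if "\<And>g. g \<in> S \<Longrightarrow> M g \<in> carrier_mat a a"
proof -
  have "mat_trace (msum a a M S) = (\<Sum>i<a. \<Sum>g\<in>S. M g $$ (i,i))"
    by (simp add: mat_trace_sum[OF msum_carrier])
  also have "\<dots> = (\<Sum>g\<in>S. \<Sum>i<a. M g $$ (i,i))" by (rule sum.swap)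
  also have "\<dots> = (\<Sum>g\<in>S. mat_trace (M g))" using that by (auto simp: mat_trace_def intro!: sum.cong)
  finally show ?thesis .
qed

lemma msum_cong: "(\<And>g. g \<in> S \<Longrightarrow> M g = M' g) \<Longrightarrow> msum a c M S = msum a c M' S"
  unfolding msum_def by (auto intro!: sum.cong)

lemma msum_reindex:
  assumes "bij_betw f S' S"
  shows "msum a c M S = msum a c (\<lambda>x. M (f x)) S'"
proof (rule eq_matI)
  fix i j assume "i < dim_row (msum a c (\<lambda>x. M (f x)) S')" "j < dim_col (msum a c (\<lambda>x. M (f x)) S')"
  then show "msum a c M S $$ (i,j) = msum a c (\<lambda>x. M (f x)) S' $$ (i,j)"
    using sum.reindex_bij_betw[OF assms, of "\<lambda>g. M g $$ (i,j)"] by simp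
qed auto

definition unitm :: "nat \<Rightarrow> nat \<Rightarrow> nat \<Rightarrow> nat \<Rightarrow> complex mat" where
  "unitm b c j k = mat b c (\<lambda>(p,q). if p = j \<and> q = k then 1 else 0)"

lemma unitm_carrier[simp]: "unitm b c j k \<in> carrier_mat b c" unfolding unitm_def by simp
lemma unitm_dim[simp]: "dim_row (unitm b c j k) = b" "dim_col (unitm b c j k) = c" unfolding unitm_def by simp_all

lemma unitm_entry:
  assumes A: "A \<in> carrier_mat a b" and B: "B \<in> carrier_mat c d" and j: "j < b" and k: "k < c"
    and i: "i < a" and l: "l < d"
  shows "(A * unitm b c j k * B) $$ (i,l) = A $$ (i,j) * B $$ (k,l)"
proof -
  have AE: "(A * unitm b c j k) $$ (i,q) = (if q = k then A $$ (i,j) else 0)" if q: "q < c" for q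
  proof -
    have "(A * unitm b c j k) $$ (i,q) = (\<Sum>p<b. A $$ (i,p) * (if p = j \<and> q = k then 1 else 0))"
      using A i q by (auto simp: scalar_prod_def unitm_def intro!: sum.cong)
    also have "\<dots> = (if q = k then A $$ (i,j) else 0)"
      using j by (auto simp: if_distrib cong: if_cong)
    finally show ?thesis .
  qed
  have "(A * unitm b c j k * B) $$ (i,l) = (\<Sum>q<c. (A * unitm b c j k) $$ (i,q) * B $$ (q,l))"
    using A B i l by (auto simp: scalar_prod_def intro!: sum.cong)
  also have "\<dots> = (\<Sum>q<c. (if q = k then A $$ (i,j) else 0) * B $$ (q,l))"
    using AE by (auto intro!: sum.cong)
  also have "\<dots> = (\<Sum>q<c. if q = k then A $$ (i,j) * B $$ (q,l) else 0)"
    by (rule sum.cong) auto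
  also have "\<dots> = A $$ (i,j) * B $$ (k,l)" using k by simp
  finally show ?thesis .
qed


definition avg :: "('a, 'b) monoid_scheme \<Rightarrow> ('a \<Rightarrow> complex mat) \<Rightarrow> ('a \<Rightarrow> complex mat) \<Rightarrow> nat \<Rightarrow> nat \<Rightarrow> complex mat \<Rightarrow> complex mat" where
  "avg G \<tau> \<sigma> b c X = msum b c (\<lambda>g. \<tau> g * X * \<sigma> (inv\<^bsub>G\<^esub> g)) (carrier G)"

definition coef :: "('a, 'b) monoid_scheme \<Rightarrow> ('a \<Rightarrow> complex mat) \<Rightarrow> ('a \<Rightarrow> complex mat) \<Rightarrow> nat \<Rightarrow> nat \<Rightarrow> nat \<Rightarrow> nat \<Rightarrow> complex" where
  "coef G \<tau> \<sigma> i j k l = (\<Sum>g\<in>carrier G. \<tau> g $$ (i,j) * \<sigma> (inv\<^bsub>G\<^esub> g) $$ (k,l))"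

lemma avg_carrier[simp]: "avg G \<tau> \<sigma> b c X \<in> carrier_mat b c" unfolding avg_def by simp

context
  fixes G :: "('a, 'b) monoid_scheme" (structure)
  assumes grp: "group G" and fin: "finite (carrier G)"
begin

interpretation group G by (rule grp)

lemma bij_mult_left: "h \<in> carrier G \<Longrightarrow> bij_betw (\<lambda>g. h \<otimes> g) (carrier G) (carrier G)"
  by (rule bij_betw_byWitness[where f' = "\<lambda>g. inv h \<otimes> g"]) (auto simp: m_assoc[symmetric])

lemma bij_inv: "bij_betw (\<lambda>g. inv g) (carrier G) (carrier G)"
  by (rule bij_betw_byWitness[where f' = "\<lambda>g. inv g"]) auto

lemma avg_intertwine:
  assumes t: "rep G b \<tau>" and s: "rep G c \<sigma>" and X: "X \<in> carrier_mat b c" and h: "h \<in> carrier G"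
  shows "\<tau> h * avg G \<tau> \<sigma> b c X = avg G \<tau> \<sigma> b c X * \<sigma> h"
proof -
  have tc: "\<And>g. g \<in> carrier G \<Longrightarrow> \<tau> g \<in> carrier_mat b b" using rep_carrier[OF grp fin t] .
  have sc: "\<And>g. g \<in> carrier G \<Longrightarrow> \<sigma> g \<in> carrier_mat c c" using rep_carrier[OF grp fin s] .
  have Mc: "\<And>g. g \<in> carrier G \<Longrightarrow> \<tau> g * X * \<sigma> (inv g) \<in> carrier_mat b c"
    using tc sc X by (meson inv_closed mult_carrier_mat)
  have "\<tau> h * avg G \<tau> \<sigma> b c X = msum b c (\<lambda>g. \<tau> h * (\<tau> g * X * \<sigma> (inv g))) (carrier G)"
    unfolding avg_def by (rule msum_mult_left[OF tc[OF h] Mc])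
  also have "\<dots> = msum b c (\<lambda>g. \<tau> (h \<otimes> g) * X * \<sigma> (inv g)) (carrier G)"
  proof (rule msum_cong)
    fix g assume g: "g \<in> carrier G"
    have "\<tau> h * (\<tau> g * X * \<sigma> (inv g)) = (\<tau> h * \<tau> g) * X * \<sigma> (inv g)"
      using tc[OF h] tc[OF g] X sc[of "inv g"] g
      by (simp add: assoc_mult_mat[of _ b b _ b _ c] assoc_mult_mat[of _ b b _ c _ c] mult_carrier_mat[of _ b b _ c])
    then show "\<tau> h * (\<tau> g * X * \<sigma> (inv g)) = \<tau> (h \<otimes> g) * X * \<sigma> (inv g)"
      using rep_mult[OF grp fin t h g] by simp
  qed
  also have "\<dots> = msum b c (\<lambda>g. \<tau> g * X * \<sigma> (inv g) * \<sigma> h) (carrier G)"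
  proof -
    have "msum b c (\<lambda>g. \<tau> g * X * \<sigma> (inv g) * \<sigma> h) (carrier G)
        = msum b c (\<lambda>g. \<tau> (h \<otimes> g) * X * \<sigma> (inv (h \<otimes> g)) * \<sigma> h) (carrier G)"
      by (rule msum_reindex[OF bij_mult_left[OF h]])
    also have "\<dots> = msum b c (\<lambda>g. \<tau> (h \<otimes> g) * X * \<sigma> (inv g)) (carrier G)"
    proof (rule msum_cong)
      fix g assume g: "g \<in> carrier G"
      have "\<sigma> (inv (h \<otimes> g)) * \<sigma> h = \<sigma> (inv g)"
        using rep_mult[OF grp fin s, of "inv (h \<otimes> g)" h] g h
        by (simp add: inv_mult_group m_assoc)
      moreover have "\<tau> (h \<otimes> g) * X * \<sigma> (inv (h \<otimes> g)) * \<sigma> h = \<tau> (h \<otimes> g) * X * (\<sigma> (inv (h \<otimes> g)) * \<sigma> h)"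
        using tc[of "h \<otimes> g"] X sc[of "inv (h \<otimes> g)"] sc[OF h] g h
        by (intro assoc_mult_mat[of _ b c _ c _ c]) (auto intro: mult_carrier_mat)
      ultimately show "\<tau> (h \<otimes> g) * X * \<sigma> (inv (h \<otimes> g)) * \<sigma> h = \<tau> (h \<otimes> g) * X * \<sigma> (inv g)" by simp
    qed
    finally show ?thesis by simp
  qed
  also have "\<dots> = avg G \<tau> \<sigma> b c X * \<sigma> h"
    unfolding avg_def by (rule msum_mult_right[OF sc[OF h] Mc, symmetric])
  finally show ?thesis .
qed

lemma avg_unitm_entry:
  assumes t: "rep G b \<tau>" and s: "rep G c \<sigma>" and i: "i < b" and j: "j < b" and k: "k < c" and l: "l < c"
  shows "avg G \<tau> \<sigma> b c (unitm b c j k) $$ (i,l) = coef G \<tau> \<sigma> i j k l"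
  unfolding avg_def coef_def using i l
  by (auto intro!: sum.cong unitm_entry[OF _ _ j k i l] rep_carrier[OF grp fin t] rep_carrier[OF grp fin s])

lemma coef_swap: "coef G \<tau> \<sigma> i j k l = coef G \<sigma> \<tau> k l i j"
  unfolding coef_def
  using sum.reindex_bij_betw[OF bij_inv, of "\<lambda>g. \<sigma> g $$ (k,l) * \<tau> (inv g) $$ (i,j)"]
  by (simp add: mult.commute)

lemma avg_trace:
  assumes t: "rep G b \<tau>" and X: "X \<in> carrier_mat b b"
  shows "mat_trace (avg G \<tau> \<tau> b b X) = of_nat (card (carrier G)) * mat_trace X"
proof -
  have tc: "\<And>g. g \<in> carrier G \<Longrightarrow> \<tau> g \<in> carrier_mat b b" using rep_carrier[OF grp fin t] .
  have "mat_trace (avg G \<tau> \<tau> b b X) = (\<Sum>g\<in>carrier G. mat_trace (\<tau> g * X * \<tau> (inv g)))"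
    unfolding avg_def using tc X by (intro msum_trace) (meson inv_closed mult_carrier_mat)
  also have "\<dots> = (\<Sum>g\<in>carrier G. mat_trace X)"
  proof (rule sum.cong[OF refl])
    fix g assume g: "g \<in> carrier G"
    have "mat_trace (\<tau> g * X * \<tau> (inv g)) = mat_trace (\<tau> (inv g) * (\<tau> g * X))"
      using tc[OF g] tc[of "inv g"] g X by (intro mat_trace_mult_comm[of _ b b]) auto
    also have "\<tau> (inv g) * (\<tau> g * X) = (\<tau> (inv g) * \<tau> g) * X"
      using tc[OF g] tc[of "inv g"] g X by (simp add: assoc_mult_mat[of _ b b _ b _ b])
    also have "\<dots> = X" using rep_inv1[OF grp fin t g] X by simp
    finally show "mat_trace (\<tau> g * X * \<tau> (inv g)) = mat_trace X" .
  qed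
  finally show ?thesis by simp
qed

end

lemma trace_smult: "(M :: complex mat) \<in> carrier_mat n n \<Longrightarrow> mat_trace (a \<cdot>\<^sub>m M) = a * mat_trace M"
  by (simp add: mat_trace_sum[of _ n] sum_distrib_left)

lemma mult_scalar_id: "(M :: complex mat) \<in> carrier_mat m n \<Longrightarrow> M * (a \<cdot>\<^sub>m 1\<^sub>m n) = a \<cdot>\<^sub>m M"
  by (simp add: mult_smult_distrib[of M m n "1\<^sub>m n" n])

lemma scalar_id_mult: "(M :: complex mat) \<in> carrier_mat n m \<Longrightarrow> (a \<cdot>\<^sub>m 1\<^sub>m n) * M = a \<cdot>\<^sub>m M"
  by (simp add: mult_smult_assoc_mat[of "1\<^sub>m n" n n M m])

context
  fixes G :: "('a, 'b) monoid_scheme" (structure)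
  assumes grp: "group G" and fin: "finite (carrier G)"
begin

interpretation group G by (rule grp)

lemma ortho_diff:
  assumes it: "irrep G b \<tau>" and irs: "irrep G c \<sigma>"
    and i: "i < b" and j: "j < b" and k: "k < c" and l: "l < c"
    and nz: "coef G \<tau> \<sigma> i j k l \<noteq> 0"
  shows "character G \<tau> = character G \<sigma>"
proof -
  have t: "rep G b \<tau>" and s: "rep G c \<sigma>" using it irs unfolding irrep_def by auto
  have tc: "\<And>g. g \<in> carrier G \<Longrightarrow> \<tau> g \<in> carrier_mat b b" using rep_carrier[OF grp fin t] .
  have sc: "\<And>g. g \<in> carrier G \<Longrightarrow> \<sigma> g \<in> carrier_mat c c" using rep_carrier[OF grp fin s] .
  define T where "T = avg G \<tau> \<sigma> b c (unitm b c j k)"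
  define S where "S = avg G \<sigma> \<tau> c b (unitm c b l i)"
  have T: "T \<in> carrier_mat b c" and S: "S \<in> carrier_mat c b" unfolding T_def S_def by auto
  have Til: "T $$ (i,l) \<noteq> 0" unfolding T_def using avg_unitm_entry[OF grp fin t s i j k l] nz by simp
  have Skj: "S $$ (k,j) \<noteq> 0" unfolding S_def using avg_unitm_entry[OF grp fin s t k l i j] nz
    coef_swap[OF grp fin, of \<tau> \<sigma> i j k l] by simp
  have Tnz: "T \<noteq> 0\<^sub>m b c" using Til i l by auto
  have Snz: "S \<noteq> 0\<^sub>m c b" using Skj k j by auto
  have iT: "\<And>h. h \<in> carrier G \<Longrightarrow> \<tau> h * T = T * \<sigma> h"
    unfolding T_def by (rule avg_intertwine[OF grp fin t s]) auto
  have iS: "\<And>h. h \<in> carrier G \<Longrightarrow> \<sigma> h * S = S * \<tau> h"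
    unfolding S_def by (rule avg_intertwine[OF grp fin s t]) auto
  have ST: "S * T \<in> carrier_mat c c" and TS: "T * S \<in> carrier_mat b b" using S T by auto
  have iST: "\<sigma> h * (S * T) = (S * T) * \<sigma> h" if h: "h \<in> carrier G" for h
  proof -
    have "\<sigma> h * (S * T) = (\<sigma> h * S) * T" using sc[OF h] S T by (simp add: assoc_mult_mat[of _ c c _ b _ c])
    also have "\<dots> = S * (\<tau> h * T)" using iS[OF h] tc[OF h] S T by (simp add: assoc_mult_mat[of _ c b _ b _ c])
    also have "\<dots> = (S * T) * \<sigma> h" using iT[OF h] sc[OF h] S T by (simp add: assoc_mult_mat[of _ c b _ c _ c])
    finally show ?thesis .
  qed
  have iTS: "\<tau> h * (T * S) = (T * S) * \<tau> h" if h: "h \<in> carrier G" for h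
  proof -
    have "\<tau> h * (T * S) = (\<tau> h * T) * S" using tc[OF h] S T by (simp add: assoc_mult_mat[of _ b b _ c _ b])
    also have "\<dots> = T * (\<sigma> h * S)" using iT[OF h] sc[OF h] S T by (simp add: assoc_mult_mat[of _ b c _ c _ b])
    also have "\<dots> = (T * S) * \<tau> h" using iS[OF h] tc[OF h] S T by (simp add: assoc_mult_mat[of _ b c _ b _ b])
    finally show ?thesis .
  qed
  obtain \<alpha> where al: "S * T = \<alpha> \<cdot>\<^sub>m 1\<^sub>m c" using schur_scalar[OF grp fin irs ST iST] by auto
  obtain \<beta> where be: "T * S = \<beta> \<cdot>\<^sub>m 1\<^sub>m b" using schur_scalar[OF grp fin it TS iTS] by auto
  have an: "\<alpha> \<noteq> 0"
  proof
    assume a0: "\<alpha> = 0"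
    let ?v = "unit_vec c l"
    have v: "?v \<in> carrier_vec c" by simp
    have Tv: "(T *\<^sub>v ?v) $ i \<noteq> 0" using Til T i l by simp
    have Tvc: "T *\<^sub>v ?v \<in> carrier_vec b" using T by simp
    have "S *\<^sub>v (T *\<^sub>v ?v) = (S * T) *\<^sub>v ?v" using S T by simp
    also have "\<dots> = 0\<^sub>v c" using a0 al by (auto intro!: eq_vecI)
    finally have "T *\<^sub>v ?v = 0\<^sub>v b" using schur_kernel[OF grp fin it s S iS Snz Tvc] by simp
    with Tv i show False by simp
  qed
  have ab: "\<alpha> = \<beta>"
  proof -
    have "T * (S * T) = (T * S) * T" using S T by (simp add: assoc_mult_mat[of _ b c _ b _ c])
    then have "\<alpha> \<cdot>\<^sub>m T = \<beta> \<cdot>\<^sub>m T" using al be T by (simp add: mult_scalar_id scalar_id_mult)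
    then have "(\<alpha> \<cdot>\<^sub>m T) $$ (i,l) = (\<beta> \<cdot>\<^sub>m T) $$ (i,l)" by simp
    then have "\<alpha> * T $$ (i,l) = \<beta> * T $$ (i,l)" using T i l by simp
    then show ?thesis using Til by simp
  qed
  have eq: "character G \<tau> g = character G \<sigma> g" if g: "g \<in> carrier G" for g
  proof -
    have "\<alpha> * mat_trace (\<tau> g) = mat_trace (\<tau> g * (T * S))"
      using be ab tc[OF g] by (simp add: mult_scalar_id trace_smult[of _ b])
    also have "\<tau> g * (T * S) = T * (\<sigma> g * S)"
    proof -
      have "\<tau> g * (T * S) = (\<tau> g * T) * S" using tc[OF g] S T by (simp add: assoc_mult_mat[of _ b b _ c _ b])
      also have "\<dots> = T * (\<sigma> g * S)" using iT[OF g] sc[OF g] S T by (simp add: assoc_mult_mat[of _ b c _ c _ b])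
      finally show ?thesis .
    qed
    also have "mat_trace (T * (\<sigma> g * S)) = mat_trace ((\<sigma> g * S) * T)"
      using T S sc[OF g] by (intro mat_trace_mult_comm[of _ b c]) auto
    also have "(\<sigma> g * S) * T = \<sigma> g * (S * T)" using sc[OF g] S T by (simp add: assoc_mult_mat[of _ c c _ b _ c])
    also have "mat_trace \<dots> = \<alpha> * mat_trace (\<sigma> g)"
      using al sc[OF g] by (simp add: mult_scalar_id trace_smult[of _ c])
    finally show ?thesis using an g by (simp add: character_def)
  qed
  show ?thesis
  proof
    fix g show "character G \<tau> g = character G \<sigma> g"
      using eq by (cases "g \<in> carrier G") (auto simp: character_def)
  qed
qed

lemma ortho_same:
  assumes it: "irrep G b \<tau>" and i: "i < b" and j: "j < b" and k: "k < b" and l: "l < b"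
  shows "coef G \<tau> \<tau> i j k l = (if j = k \<and> i = l then of_nat (card (carrier G)) / of_nat b else 0)"
proof -
  have t: "rep G b \<tau>" and b: "b > 0" using it unfolding irrep_def by auto
  define A where "A = avg G \<tau> \<tau> b b (unitm b b j k)"
  have A: "A \<in> carrier_mat b b" unfolding A_def by simp
  obtain \<alpha> where al: "A = \<alpha> \<cdot>\<^sub>m 1\<^sub>m b"
    using schur_scalar[OF grp fin it A] avg_intertwine[OF grp fin t t] unfolding A_def by fastforce
  have "mat_trace A = of_nat (card (carrier G)) * mat_trace (unitm b b j k)"
    unfolding A_def by (rule avg_trace[OF grp fin t]) simp
  also have "mat_trace (unitm b b j k) = (if j = k then 1 else 0)"
    using j by (simp add: mat_trace_sum[of _ b] unitm_def)
  finally have tr: "mat_trace A = (if j = k then of_nat (card (carrier G)) else 0)" by simp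
  have "mat_trace A = \<alpha> * of_nat b" using al by (simp add: trace_smult[of _ b] mat_trace_sum[of _ b])
  then have "\<alpha> = (if j = k then of_nat (card (carrier G)) / of_nat b else 0)" using tr b
    by (auto simp: field_simps)
  moreover have "coef G \<tau> \<tau> i j k l = A $$ (i,l)" unfolding A_def using avg_unitm_entry[OF grp fin t t i j k l] by simp
  ultimately show ?thesis using al i l by auto
qed

end

lemma sum4_rearrange:
  fixes A :: "_ \<Rightarrow> _ \<Rightarrow> complex"
  shows "(\<Sum>g\<in>S. (\<Sum>i<b. A g i) * (\<Sum>p<n. \<Sum>q<n. c p q * D g q p)) = (\<Sum>p<n. \<Sum>q<n. c p q * (\<Sum>i<b. \<Sum>g\<in>S. D g q p * A g i))"
proof -
  have "(\<Sum>g\<in>S. (\<Sum>i<b. A g i) * (\<Sum>p<n. \<Sum>q<n. c p q * D g q p)) = (\<Sum>g\<in>S. \<Sum>p<n. \<Sum>q<n. \<Sum>i<b. c p q * (D g q p * A g i))"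
    by (simp add: sum_distrib_left sum_distrib_right mult_ac)
  also have "\<dots> = (\<Sum>p<n. \<Sum>g\<in>S. \<Sum>q<n. \<Sum>i<b. c p q * (D g q p * A g i))" by (rule sum.swap)
  also have "\<dots> = (\<Sum>p<n. \<Sum>q<n. \<Sum>g\<in>S. \<Sum>i<b. c p q * (D g q p * A g i))" by (rule sum.cong[OF refl], rule sum.swap)
  also have "\<dots> = (\<Sum>p<n. \<Sum>q<n. \<Sum>i<b. \<Sum>g\<in>S. c p q * (D g q p * A g i))" by (rule sum.cong[OF refl], rule sum.cong[OF refl], rule sum.swap)
  also have "\<dots> = (\<Sum>p<n. \<Sum>q<n. c p q * (\<Sum>i<b. \<Sum>g\<in>S. D g q p * A g i))" by (simp add: sum_distrib_left)
  finally show ?thesis .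
qed

context
  fixes G :: "('a, 'b) monoid_scheme" (structure)
  assumes grp: "group G" and fin: "finite (carrier G)"
begin

interpretation group G by (rule grp)

lemma char_as_sum: "rep G b \<rho> \<Longrightarrow> g \<in> carrier G \<Longrightarrow> character G \<rho> g = (\<Sum>i<b. \<rho> g $$ (i,i))"
  using rep_carrier[OF grp fin] by (simp add: character_def mat_trace_sum)

lemma char_norm_inv:
  assumes it: "irrep G b \<tau>"
  shows "(\<Sum>g\<in>carrier G. character G \<tau> g * character G \<tau> (inv g)) = of_nat (card (carrier G))"
proof -
  have t: "rep G b \<tau>" and b: "b > 0" using it unfolding irrep_def by auto
  have "(\<Sum>g\<in>carrier G. character G \<tau> g * character G \<tau> (inv g))
      = (\<Sum>g\<in>carrier G. (\<Sum>i<b. \<tau> g $$ (i,i)) * (\<Sum>k<b. \<tau> (inv g) $$ (k,k)))"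
    by (rule sum.cong[OF refl]) (simp add: char_as_sum[OF t])
  also have "\<dots> = (\<Sum>g\<in>carrier G. \<Sum>k<b. \<Sum>i<b. \<tau> g $$ (i,i) * \<tau> (inv g) $$ (k,k))"
    by (simp add: sum_distrib_left sum_distrib_right)
  also have "\<dots> = (\<Sum>k<b. \<Sum>i<b. coef G \<tau> \<tau> i i k k)"
    unfolding coef_def
    by (subst sum.swap, rule sum.cong[OF refl], rule sum.swap)
  also have "\<dots> = (\<Sum>k<b. \<Sum>i<b. if k = i then of_nat (card (carrier G)) / of_nat b else 0)"
    by (rule sum.cong[OF refl], rule sum.cong[OF refl]) (auto simp: ortho_same[OF grp fin it])
  also have "\<dots> = of_nat b * (of_nat (card (carrier G)) / of_nat b)" by simp
  finally show ?thesis using b by simp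
qed

lemma char_norm:
  assumes it: "irrep G b \<tau>"
  shows "(\<Sum>g\<in>carrier G. (cmod (character G \<tau> g))^2) = real (card (carrier G))"
proof -
  have t: "rep G b \<tau>" using it unfolding irrep_def by auto
  have "of_real (\<Sum>g\<in>carrier G. (cmod (character G \<tau> g))^2) = (\<Sum>g\<in>carrier G. character G \<tau> g * character G \<tau> (inv g))"
    unfolding of_real_sum
  proof (rule sum.cong[OF refl])
    fix g assume g: "g \<in> carrier G"
    show "complex_of_real ((cmod (character G \<tau> g))\<^sup>2) = character G \<tau> g * character G \<tau> (inv g)"
      using complex_norm_square[of "character G \<tau> g"] char_inv[OF grp fin t g] by simp
  qed
  also have "\<dots> = of_nat (card (carrier G))" by (rule char_norm_inv[OF it])
  finally show ?thesis by (metis of_real_eq_iff of_real_of_nat_eq)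
qed

lemma conv_expand:
  assumes t: "rep G b \<rho>" and t': "rep G b' \<rho>'" and k: "k \<in> carrier G"
  shows "(\<Sum>g\<in>carrier G. character G \<rho> (inv g) * character G \<rho>' (inv k \<otimes> g))
       = (\<Sum>p<b'. \<Sum>q<b'. \<rho>' (inv k) $$ (p,q) * (\<Sum>i<b. coef G \<rho>' \<rho> q p i i))"
proof -
  have "(\<Sum>g\<in>carrier G. character G \<rho> (inv g) * character G \<rho>' (inv k \<otimes> g))
     = (\<Sum>g\<in>carrier G. (\<Sum>i<b. \<rho> (inv g) $$ (i,i)) * (\<Sum>p<b'. \<Sum>q<b'. \<rho>' (inv k) $$ (p,q) * \<rho>' g $$ (q,p)))"
  proof (rule sum.cong[OF refl])
    fix g assume g: "g \<in> carrier G"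
    have "character G \<rho>' (inv k \<otimes> g) = mat_trace (\<rho>' (inv k) * \<rho>' g)"
      using g k by (simp add: character_def rep_mult[OF grp fin t'])
    also have "\<dots> = (\<Sum>p<b'. (\<rho>' (inv k) * \<rho>' g) $$ (p,p))"
      using rep_carrier[OF grp fin t'] g k by (intro mat_trace_sum) (meson inv_closed mult_carrier_mat)
    also have "\<dots> = (\<Sum>p<b'. \<Sum>q<b'. \<rho>' (inv k) $$ (p,q) * \<rho>' g $$ (q,p))"
      by (rule sum.cong[OF refl], rule mult_entry) (use rep_carrier[OF grp fin t'] g k in auto)
    finally show "character G \<rho> (inv g) * character G \<rho>' (inv k \<otimes> g) =
      (\<Sum>i<b. \<rho> (inv g) $$ (i,i)) * (\<Sum>p<b'. \<Sum>q<b'. \<rho>' (inv k) $$ (p,q) * \<rho>' g $$ (q,p))"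
      using g by (simp add: char_as_sum[OF t])
  qed
  also have "\<dots> = (\<Sum>p<b'. \<Sum>q<b'. \<rho>' (inv k) $$ (p,q) * (\<Sum>i<b. \<Sum>g\<in>carrier G. \<rho>' g $$ (q,p) * \<rho> (inv g) $$ (i,i)))"
    by (rule sum4_rearrange)
  finally show ?thesis unfolding coef_def .
qed

lemma conv_char:
  assumes it: "irrep G b \<tau>" and it': "irrep G b' \<tau>'" and k: "k \<in> carrier G"
  shows "(\<Sum>g\<in>carrier G. character G \<tau> (inv g) * character G \<tau>' (inv k \<otimes> g))
       = (if character G \<tau> = character G \<tau>' then of_nat (card (carrier G)) / of_nat b * character G \<tau> (inv k) else 0)"
proof (cases "character G \<tau> = character G \<tau>'")
  case True
  have t: "rep G b \<tau>" using it unfolding irrep_def by auto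
  have "(\<Sum>g\<in>carrier G. character G \<tau> (inv g) * character G \<tau>' (inv k \<otimes> g))
      = (\<Sum>g\<in>carrier G. character G \<tau> (inv g) * character G \<tau> (inv k \<otimes> g))" using True by simp
  also have "\<dots> = (\<Sum>p<b. \<Sum>q<b. \<tau> (inv k) $$ (p,q) * (\<Sum>i<b. coef G \<tau> \<tau> q p i i))"
    by (rule conv_expand[OF t t k])
  also have "\<dots> = (\<Sum>p<b. \<Sum>q<b. \<tau> (inv k) $$ (p,q) * (if p = q then of_nat (card (carrier G)) / of_nat b else 0))"
  proof (rule sum.cong[OF refl], rule sum.cong[OF refl])
    fix p q assume p: "p \<in> {..<b}" and q: "q \<in> {..<b}"
    have "(\<Sum>i<b. coef G \<tau> \<tau> q p i i) = (\<Sum>i<b. if i = p \<and> i = q then of_nat (card (carrier G)) / of_nat b else 0)"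
      by (rule sum.cong[OF refl]) (use p q in \<open>auto simp: ortho_same[OF grp fin it]\<close>)
    also have "\<dots> = (if p = q then of_nat (card (carrier G)) / of_nat b else 0)"
      using p q by (auto simp: sum.delta)
    finally show "\<tau> (inv k) $$ (p,q) * (\<Sum>i<b. coef G \<tau> \<tau> q p i i) =
      \<tau> (inv k) $$ (p,q) * (if p = q then of_nat (card (carrier G)) / of_nat b else 0)" by simp
  qed
  also have "\<dots> = (\<Sum>p<b. \<tau> (inv k) $$ (p,p) * (of_nat (card (carrier G)) / of_nat b))"
    by (rule sum.cong[OF refl]) (simp add: if_distrib cong: if_cong)
  also have "\<dots> = (\<Sum>p<b. \<tau> (inv k) $$ (p,p)) * (of_nat (card (carrier G)) / of_nat b)"
    by (rule sum_distrib_right[symmetric])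
  also have "\<dots> = of_nat (card (carrier G)) / of_nat b * character G \<tau> (inv k)"
    using k char_as_sum[OF t, of "inv k"] by (simp add: mult.commute)
  finally show ?thesis using True by simp
next
  case False
  have t: "rep G b \<tau>" using it unfolding irrep_def by auto
  have t': "rep G b' \<tau>'" using it' unfolding irrep_def by auto
  have z: "coef G \<tau>' \<tau> q p i i = 0" if "q < b'" "p < b'" "i < b" for p q i
    using ortho_diff[OF grp fin it' it, of q p i i] that False by auto
  have "(\<Sum>g\<in>carrier G. character G \<tau> (inv g) * character G \<tau>' (inv k \<otimes> g))
      = (\<Sum>p<b'. \<Sum>q<b'. \<tau>' (inv k) $$ (p,q) * (\<Sum>i<b. coef G \<tau>' \<tau> q p i i))"
    by (rule conv_expand[OF t t' k])
  also have "\<dots> = 0" using z by simp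
  finally show ?thesis using False by simp
qed

end

definition Ep :: "('a, 'b) monoid_scheme \<Rightarrow> ('a \<Rightarrow> complex mat) \<Rightarrow> nat \<Rightarrow> ('a \<Rightarrow> complex) \<Rightarrow> complex mat" where
  "Ep G \<sigma> m \<chi> = msum m m (\<lambda>g. (complex_of_real (char_dim G \<chi>) / of_nat (card (carrier G)) * \<chi> (inv\<^bsub>G\<^esub> g)) \<cdot>\<^sub>m \<sigma> g) (carrier G)"

lemma Ep_carrier[simp]: "Ep G \<sigma> m \<chi> \<in> carrier_mat m m" unfolding Ep_def by simp
lemma Ep_dim[simp]: "dim_row (Ep G \<sigma> m \<chi>) = m" "dim_col (Ep G \<sigma> m \<chi>) = m" unfolding Ep_def by simp_all

context
  fixes G :: "('a, 'b) monoid_scheme" (structure)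
  assumes grp: "group G" and fin: "finite (carrier G)"
begin

interpretation group G by (rule grp)

lemma char_dim_char: "rep G b \<tau> \<Longrightarrow> char_dim G (character G \<tau>) = real b"
  unfolding char_dim_def using character_one[OF grp fin] by simp

lemma Ep_entry:
  assumes s: "rep G m \<sigma>" and x: "x < m" and y: "y < m"
  shows "Ep G \<sigma> m \<chi> $$ (x,y) = (\<Sum>g\<in>carrier G. (complex_of_real (char_dim G \<chi>) / of_nat (card (carrier G)) * \<chi> (inv g)) * \<sigma> g $$ (x,y))"
  unfolding Ep_def msum_index[OF x y]
proof (rule sum.cong[OF refl])
  fix g assume g: "g \<in> carrier G"
  show "((complex_of_real (char_dim G \<chi>) / of_nat (card (carrier G)) * \<chi> (inv g)) \<cdot>\<^sub>m \<sigma> g) $$ (x,y) =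
    (complex_of_real (char_dim G \<chi>) / of_nat (card (carrier G)) * \<chi> (inv g)) * \<sigma> g $$ (x,y)"
    using rep_carrier[OF grp fin s g] x y by simp
qed

lemma Ep_mult:
  assumes s: "rep G m \<sigma>" and it: "irrep G b \<tau>" and it': "irrep G b' \<tau>'"
  shows "Ep G \<sigma> m (character G \<tau>) * Ep G \<sigma> m (character G \<tau>') =
    (if character G \<tau> = character G \<tau>' then Ep G \<sigma> m (character G \<tau>) else 0\<^sub>m m m)"
proof -
  let ?n = "card (carrier G)"
  let ?\<chi> = "character G \<tau>" and ?\<chi>' = "character G \<tau>'"
  have t: "rep G b \<tau>" and t': "rep G b' \<tau>'" and bp: "b > 0" using it it' unfolding irrep_def by auto
  have sc: "\<And>g. g \<in> carrier G \<Longrightarrow> \<sigma> g \<in> carrier_mat m m" using rep_carrier[OF grp fin s] .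
  have n0: "?n > 0" using fin by (auto simp: card_gt_0_iff)
  define c where "c = complex_of_real (real b) / of_nat ?n"
  define c' where "c' = complex_of_real (real b') / of_nat ?n"
  have cd: "complex_of_real (char_dim G ?\<chi>) / of_nat ?n = c" unfolding c_def using char_dim_char[OF t] by simp
  have cd': "complex_of_real (char_dim G ?\<chi>') / of_nat ?n = c'" unfolding c'_def using char_dim_char[OF t'] by simp
  have entry: "(Ep G \<sigma> m ?\<chi> * Ep G \<sigma> m ?\<chi>') $$ (x,y) =
     (if ?\<chi> = ?\<chi>' then Ep G \<sigma> m ?\<chi> $$ (x,y) else 0)" if x: "x < m" and y: "y < m" for x y
  proof -
    have "(Ep G \<sigma> m ?\<chi> * Ep G \<sigma> m ?\<chi>') $$ (x,y) = (\<Sum>z<m. Ep G \<sigma> m ?\<chi> $$ (x,z) * Ep G \<sigma> m ?\<chi>' $$ (z,y))"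
      using x y by (intro mult_entry) auto
    also have "\<dots> = (\<Sum>z<m. (\<Sum>g\<in>carrier G. c * ?\<chi> (inv g) * \<sigma> g $$ (x,z)) * (\<Sum>h\<in>carrier G. c' * ?\<chi>' (inv h) * \<sigma> h $$ (z,y)))"
      using x y by (intro sum.cong[OF refl]) (simp add: Ep_entry[OF s] cd cd')
    also have "\<dots> = (\<Sum>g\<in>carrier G. \<Sum>h\<in>carrier G. (c * ?\<chi> (inv g)) * (c' * ?\<chi>' (inv h)) * (\<Sum>z<m. \<sigma> g $$ (x,z) * \<sigma> h $$ (z,y)))"
    proof -
      have "(\<Sum>z<m. (\<Sum>g\<in>carrier G. c * ?\<chi> (inv g) * \<sigma> g $$ (x,z)) * (\<Sum>h\<in>carrier G. c' * ?\<chi>' (inv h) * \<sigma> h $$ (z,y)))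
        = (\<Sum>z<m. \<Sum>g\<in>carrier G. \<Sum>h\<in>carrier G. (c * ?\<chi> (inv g)) * (c' * ?\<chi>' (inv h)) * (\<sigma> g $$ (x,z) * \<sigma> h $$ (z,y)))"
        by (simp add: sum_distrib_left sum_distrib_right mult_ac)
      also have "\<dots> = (\<Sum>g\<in>carrier G. \<Sum>z<m. \<Sum>h\<in>carrier G. (c * ?\<chi> (inv g)) * (c' * ?\<chi>' (inv h)) * (\<sigma> g $$ (x,z) * \<sigma> h $$ (z,y)))"
        by (rule sum.swap)
      also have "\<dots> = (\<Sum>g\<in>carrier G. \<Sum>h\<in>carrier G. \<Sum>z<m. (c * ?\<chi> (inv g)) * (c' * ?\<chi>' (inv h)) * (\<sigma> g $$ (x,z) * \<sigma> h $$ (z,y)))"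
        by (rule sum.cong[OF refl], rule sum.swap)
      also have "\<dots> = (\<Sum>g\<in>carrier G. \<Sum>h\<in>carrier G. (c * ?\<chi> (inv g)) * (c' * ?\<chi>' (inv h)) * (\<Sum>z<m. \<sigma> g $$ (x,z) * \<sigma> h $$ (z,y)))"
        by (simp add: sum_distrib_left)
      finally show ?thesis .
    qed
    also have "\<dots> = (\<Sum>g\<in>carrier G. \<Sum>h\<in>carrier G. (c * ?\<chi> (inv g)) * (c' * ?\<chi>' (inv h)) * \<sigma> (g \<otimes> h) $$ (x,y))"
    proof (intro sum.cong[OF refl])
      fix g h assume g: "g \<in> carrier G" and h: "h \<in> carrier G"
      have "\<sigma> (g \<otimes> h) $$ (x,y) = (\<Sum>z<m. \<sigma> g $$ (x,z) * \<sigma> h $$ (z,y))"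
        using rep_mult[OF grp fin s g h] mult_entry[OF sc[OF g] sc[OF h] x y] by simp
      then show "(c * ?\<chi> (inv g)) * (c' * ?\<chi>' (inv h)) * (\<Sum>z<m. \<sigma> g $$ (x,z) * \<sigma> h $$ (z,y))
        = (c * ?\<chi> (inv g)) * (c' * ?\<chi>' (inv h)) * \<sigma> (g \<otimes> h) $$ (x,y)" by simp
    qed
    also have "\<dots> = (\<Sum>g\<in>carrier G. \<Sum>k\<in>carrier G. (c * ?\<chi> (inv g)) * (c' * ?\<chi>' (inv k \<otimes> g)) * \<sigma> k $$ (x,y))"
    proof (rule sum.cong[OF refl])
      fix g assume g: "g \<in> carrier G"
      have "(\<Sum>h\<in>carrier G. (c * ?\<chi> (inv g)) * (c' * ?\<chi>' (inv h)) * \<sigma> (g \<otimes> h) $$ (x,y))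
          = (\<Sum>k\<in>carrier G. (c * ?\<chi> (inv g)) * (c' * ?\<chi>' (inv (inv g \<otimes> k))) * \<sigma> (g \<otimes> (inv g \<otimes> k)) $$ (x,y))"
        using sum.reindex_bij_betw[OF bij_mult_left[OF grp fin, of "inv g"], of "\<lambda>h. (c * ?\<chi> (inv g)) * (c' * ?\<chi>' (inv h)) * \<sigma> (g \<otimes> h) $$ (x,y)"] g
        by simp
      also have "\<dots> = (\<Sum>k\<in>carrier G. (c * ?\<chi> (inv g)) * (c' * ?\<chi>' (inv k \<otimes> g)) * \<sigma> k $$ (x,y))"
        using g by (intro sum.cong[OF refl]) (simp add: inv_mult_group m_assoc[symmetric])
      finally show "(\<Sum>h\<in>carrier G. (c * ?\<chi> (inv g)) * (c' * ?\<chi>' (inv h)) * \<sigma> (g \<otimes> h) $$ (x,y))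
          = (\<Sum>k\<in>carrier G. (c * ?\<chi> (inv g)) * (c' * ?\<chi>' (inv k \<otimes> g)) * \<sigma> k $$ (x,y))" .
    qed
    also have "\<dots> = (\<Sum>k\<in>carrier G. c * c' * \<sigma> k $$ (x,y) * (\<Sum>g\<in>carrier G. ?\<chi> (inv g) * ?\<chi>' (inv k \<otimes> g)))"
      by (subst sum.swap) (simp add: sum_distrib_left mult_ac)
    also have "\<dots> = (\<Sum>k\<in>carrier G. c * c' * \<sigma> k $$ (x,y) *
        (if ?\<chi> = ?\<chi>' then of_nat ?n / of_nat b * ?\<chi> (inv k) else 0))"
      by (rule sum.cong[OF refl]) (simp add: conv_char[OF grp fin it it'])
    also have "\<dots> = (if ?\<chi> = ?\<chi>' then Ep G \<sigma> m ?\<chi> $$ (x,y) else 0)"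
    proof (cases "?\<chi> = ?\<chi>'")
      case True
      have "real b = real b'" using char_dim_char[OF t] char_dim_char[OF t'] True by simp
      then have cc: "c' = c" unfolding c_def c'_def by simp
      have "c * c' * (of_nat ?n / of_nat b) = c" unfolding cc using n0 bp by (simp add: c_def)
      then have eq: "c * c' * (of_nat ?n / of_nat b) = c" .
      have "(\<Sum>k\<in>carrier G. c * c' * \<sigma> k $$ (x,y) * (of_nat ?n / of_nat b * ?\<chi> (inv k)))
          = (\<Sum>k\<in>carrier G. (c * c' * (of_nat ?n / of_nat b)) * ?\<chi> (inv k) * \<sigma> k $$ (x,y))"
        by (rule sum.cong[OF refl]) (simp only: mult_ac)
      also have "\<dots> = (\<Sum>k\<in>carrier G. c * ?\<chi> (inv k) * \<sigma> k $$ (x,y))" unfolding eq ..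
      also have "\<dots> = Ep G \<sigma> m ?\<chi> $$ (x,y)" by (simp only: Ep_entry[OF s x y] cd)
      finally show ?thesis using True by simp
    qed simp
    finally show ?thesis .
  qed
  show ?thesis
  proof (rule eq_matI)
    fix i j assume "i < dim_row (if ?\<chi> = ?\<chi>' then Ep G \<sigma> m ?\<chi> else 0\<^sub>m m m)"
      "j < dim_col (if ?\<chi> = ?\<chi>' then Ep G \<sigma> m ?\<chi> else 0\<^sub>m m m)"
    then have ij: "i < m" "j < m" by (auto split: if_splits)
    show "(Ep G \<sigma> m ?\<chi> * Ep G \<sigma> m ?\<chi>') $$ (i,j) = (if ?\<chi> = ?\<chi>' then Ep G \<sigma> m ?\<chi> else 0\<^sub>m m m) $$ (i,j)"
      using entry[OF ij] ij by auto
  qed auto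
qed

end

lemma sum_split_mult: "(\<Sum>k<a*b. g k) = (\<Sum>p<a. \<Sum>q<b. g (p*b+q))" for g :: "nat \<Rightarrow> 'x::comm_monoid_add"
proof -
  have "(\<Sum>k<a*b. g k) = (\<Sum>p<a. sum g {p*b..<p*b+b})" by (rule sum.nat_group[symmetric])
  also have "\<dots> = (\<Sum>p<a. \<Sum>q<b. g (p*b+q))"
  proof (rule sum.cong[OF refl])
    fix p
    show "sum g {p*b..<p*b+b} = (\<Sum>q<b. g (p*b+q))"
      by (rule sum.reindex_bij_witness[where j="\<lambda>k. k - p*b" and i="\<lambda>q. p*b+q"]) auto
  qed
  finally show ?thesis .
qed

definition kron :: "nat \<Rightarrow> nat \<Rightarrow> complex mat \<Rightarrow> complex mat \<Rightarrow> complex mat" where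
  "kron a b A B = mat (a*b) (a*b) (\<lambda>(i,j). A $$ (i div b, j div b) * B $$ (i mod b, j mod b))"

lemma kron_carrier[simp]: "kron a b A B \<in> carrier_mat (a*b) (a*b)" unfolding kron_def by simp
lemma kron_dim[simp]: "dim_row (kron a b A B) = a*b" "dim_col (kron a b A B) = a*b" unfolding kron_def by simp_all

lemma kron_index: "i < a*b \<Longrightarrow> j < a*b \<Longrightarrow> kron a b A B $$ (i,j) = A $$ (i div b, j div b) * B $$ (i mod b, j mod b)"
  unfolding kron_def by simp

lemma kron_mult:
  assumes A: "A \<in> carrier_mat a a" and A': "A' \<in> carrier_mat a a" and B: "B \<in> carrier_mat b b" and B': "B' \<in> carrier_mat b b"
  shows "kron a b (A * A') (B * B') = kron a b A B * kron a b A' B'"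
proof (rule eq_matI)
  fix i j assume "i < dim_row (kron a b A B * kron a b A' B')" "j < dim_col (kron a b A B * kron a b A' B')"
  then have i: "i < a*b" and j: "j < a*b" by auto
  then have b: "b > 0" by (cases b) auto
  have id: "i div b < a" "j div b < a" using i j by (auto simp: less_mult_imp_div_less)
  have im: "i mod b < b" "j mod b < b" using b by auto
  have "(kron a b A B * kron a b A' B') $$ (i,j) = (\<Sum>k<a*b. kron a b A B $$ (i,k) * kron a b A' B' $$ (k,j))"
    using i j by (intro mult_entry) auto
  also have "\<dots> = (\<Sum>p<a. \<Sum>q<b. kron a b A B $$ (i,p*b+q) * kron a b A' B' $$ (p*b+q,j))"
    by (rule sum_split_mult)
  also have "\<dots> = (\<Sum>p<a. \<Sum>q<b. (A $$ (i div b, p) * A' $$ (p, j div b)) * (B $$ (i mod b, q) * B' $$ (q, j mod b)))"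
  proof (intro sum.cong[OF refl])
    fix p q assume p: "p \<in> {..<a}" and q: "q \<in> {..<b}"
    have pq: "p*b+q < a*b"
    proof -
      have "p*b+q < p*b+b" using q by simp
      also have "\<dots> = (p+1)*b" by simp
      also have "\<dots> \<le> a*b" using p by (intro mult_right_mono) auto
      finally show ?thesis .
    qed
    have d: "(p*b+q) div b = p" "(p*b+q) mod b = q" using q by auto
    show "kron a b A B $$ (i,p*b+q) * kron a b A' B' $$ (p*b+q,j) =
      (A $$ (i div b, p) * A' $$ (p, j div b)) * (B $$ (i mod b, q) * B' $$ (q, j mod b))"
      by (simp only: kron_index[OF i pq] kron_index[OF pq j] d) (simp add: mult_ac)
  qed
  also have "\<dots> = (\<Sum>p<a. A $$ (i div b, p) * A' $$ (p, j div b)) * (\<Sum>q<b. B $$ (i mod b, q) * B' $$ (q, j mod b))"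
    by (simp add: sum_product)
  also have "\<dots> = (A * A') $$ (i div b, j div b) * (B * B') $$ (i mod b, j mod b)"
    using mult_entry[OF A A' id] mult_entry[OF B B' im] by simp
  also have "\<dots> = kron a b (A * A') (B * B') $$ (i,j)" using i j by (simp add: kron_index)
  finally show "kron a b (A * A') (B * B') $$ (i,j) = (kron a b A B * kron a b A' B') $$ (i,j)" by simp
qed auto

lemma kron_one: "kron a b (1\<^sub>m a) (1\<^sub>m b) = 1\<^sub>m (a*b)"
proof (rule eq_matI)
  fix i j assume "i < dim_row (1\<^sub>m (a*b))" "j < dim_col (1\<^sub>m (a*b))"
  then have i: "i < a*b" and j: "j < a*b" by auto
  then have b: "b > 0" by (cases b) auto
  have id: "i div b < a" "j div b < a" using i j by (auto simp: less_mult_imp_div_less)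
  have im: "i mod b < b" "j mod b < b" using b by auto
  have "(i div b = j div b \<and> i mod b = j mod b) = (i = j)" by (metis div_mult_mod_eq)
  then show "kron a b (1\<^sub>m a) (1\<^sub>m b) $$ (i,j) = 1\<^sub>m (a*b) $$ (i,j)"
    using i j id im by (auto simp: kron_index)
qed auto

lemma kron_trace:
  assumes A: "A \<in> carrier_mat a a" and B: "B \<in> carrier_mat b b"
  shows "mat_trace (kron a b A B) = mat_trace A * mat_trace B"
proof -
  have "mat_trace (kron a b A B) = (\<Sum>k<a*b. kron a b A B $$ (k,k))" by (simp add: mat_trace_sum[of _ "a*b"])
  also have "\<dots> = (\<Sum>p<a. \<Sum>q<b. kron a b A B $$ (p*b+q,p*b+q))" by (rule sum_split_mult)
  also have "\<dots> = (\<Sum>p<a. \<Sum>q<b. A $$ (p,p) * B $$ (q,q))"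
  proof (intro sum.cong[OF refl])
    fix p q assume p: "p \<in> {..<a}" and q: "q \<in> {..<b}"
    have pq: "p*b+q < a*b"
    proof -
      have "p*b+q < p*b+b" using q by simp
      also have "\<dots> = (p+1)*b" by simp
      also have "\<dots> \<le> a*b" using p by (intro mult_right_mono) auto
      finally show ?thesis .
    qed
    have d: "(p*b+q) div b = p" "(p*b+q) mod b = q" using q by auto
    show "kron a b A B $$ (p*b+q,p*b+q) = A $$ (p,p) * B $$ (q,q)" by (simp only: kron_index[OF pq pq] d)
  qed
  also have "\<dots> = mat_trace A * mat_trace B"
    using A B by (simp add: mat_trace_sum sum_product)
  finally show ?thesis .
qed

definition tensor_rep :: "nat \<Rightarrow> nat \<Rightarrow> ('a \<Rightarrow> complex mat) \<Rightarrow> ('a \<Rightarrow> complex mat) \<Rightarrow> 'a \<Rightarrow> complex mat" where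
  "tensor_rep a b \<rho> \<rho>' = (\<lambda>g. kron a b (\<rho> g) (\<rho>' g))"

context
  fixes G :: "('a, 'b) monoid_scheme" (structure)
  assumes grp: "group G" and fin: "finite (carrier G)"
begin

interpretation group G by (rule grp)

lemma tensor_rep_rep:
  assumes r: "rep G a \<rho>" and r': "rep G b \<rho>'"
  shows "rep G (a*b) (tensor_rep a b \<rho> \<rho>')"
  unfolding rep_def tensor_rep_def
  using rep_carrier[OF grp fin r] rep_carrier[OF grp fin r'] rep_one[OF grp fin r] rep_one[OF grp fin r']
    rep_mult[OF grp fin r] rep_mult[OF grp fin r']
  by (auto simp: kron_one kron_mult)

lemma tensor_rep_char:
  assumes r: "rep G a \<rho>" and r': "rep G b \<rho>'"
  shows "character G (tensor_rep a b \<rho> \<rho>') = (\<lambda>g. character G \<rho> g * character G \<rho>' g)"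
  using rep_carrier[OF grp fin r] rep_carrier[OF grp fin r']
  by (auto simp: character_def tensor_rep_def kron_trace)

end

context
  fixes G :: "('a, 'b) monoid_scheme" (structure)
  assumes grp: "group G" and fin: "finite (carrier G)"
begin

interpretation group G by (rule grp)

lemma irr_charsE:
  assumes "\<chi> \<in> irr_chars G"
  obtains d \<rho> where "irrep G d \<rho>" "\<chi> = character G \<rho>"
  using assms unfolding irr_chars_def by blast

lemma Ep_mult_irr:
  assumes s: "rep G m \<sigma>" and c1: "\<chi> \<in> irr_chars G" and c2: "\<chi>' \<in> irr_chars G"
  shows "Ep G \<sigma> m \<chi> * Ep G \<sigma> m \<chi>' = (if \<chi> = \<chi>' then Ep G \<sigma> m \<chi> else 0\<^sub>m m m)"
proof -
  obtain d \<rho> where 1: "irrep G d \<rho>" "\<chi> = character G \<rho>" using c1 by (rule irr_charsE)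
  obtain d' \<rho>' where 2: "irrep G d' \<rho>'" "\<chi>' = character G \<rho>'" using c2 by (rule irr_charsE)
  show ?thesis using Ep_mult[OF grp fin s 1(1) 2(1)] 1(2) 2(2) by simp
qed

lemma ES_idem:
  assumes s: "rep G m \<sigma>" and S: "S \<subseteq> irr_chars G" and fS: "finite S"
  shows "msum m m (Ep G \<sigma> m) S * msum m m (Ep G \<sigma> m) S = msum m m (Ep G \<sigma> m) S"
proof -
  let ?E = "msum m m (Ep G \<sigma> m) S"
  have "?E * ?E = msum m m (\<lambda>\<chi>'. ?E * Ep G \<sigma> m \<chi>') S"
    by (rule msum_mult_left) auto
  also have "\<dots> = msum m m (\<lambda>\<chi>'. Ep G \<sigma> m \<chi>') S"
  proof (rule msum_cong)
    fix \<chi>' assume c': "\<chi>' \<in> S"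
    have "?E * Ep G \<sigma> m \<chi>' = msum m m (\<lambda>\<chi>. Ep G \<sigma> m \<chi> * Ep G \<sigma> m \<chi>') S"
      by (rule msum_mult_right) auto
    also have "\<dots> = msum m m (\<lambda>\<chi>. if \<chi> = \<chi>' then Ep G \<sigma> m \<chi> else 0\<^sub>m m m) S"
    proof (rule msum_cong)
      fix \<chi> assume "\<chi> \<in> S"
      then have "\<chi> \<in> irr_chars G" using S by auto
      then show "Ep G \<sigma> m \<chi> * Ep G \<sigma> m \<chi>' = (if \<chi> = \<chi>' then Ep G \<sigma> m \<chi> else 0\<^sub>m m m)"
        using Ep_mult_irr[OF s, of \<chi> \<chi>'] S c' by auto
    qed
    also have "\<dots> = Ep G \<sigma> m \<chi>'"
    proof (rule eq_matI)
      fix i j assume "i < dim_row (Ep G \<sigma> m \<chi>')" "j < dim_col (Ep G \<sigma> m \<chi>')"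
      then have i: "i < m" and j: "j < m" by auto
      have "(\<Sum>\<chi>\<in>S. (if \<chi> = \<chi>' then Ep G \<sigma> m \<chi> else 0\<^sub>m m m) $$ (i,j)) = (\<Sum>\<chi>\<in>S. if \<chi> = \<chi>' then Ep G \<sigma> m \<chi>' $$ (i,j) else 0)"
        by (rule sum.cong[OF refl]) (use i j in auto)
      also have "\<dots> = Ep G \<sigma> m \<chi>' $$ (i,j)" using fS c' by (simp add: sum.delta)
      finally show "msum m m (\<lambda>\<chi>. if \<chi> = \<chi>' then Ep G \<sigma> m \<chi> else 0\<^sub>m m m) S $$ (i,j) = Ep G \<sigma> m \<chi>' $$ (i,j)"
        using i j by simp
    qed auto
    finally show "?E * Ep G \<sigma> m \<chi>' = Ep G \<sigma> m \<chi>'" .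
  qed
  finally show ?thesis .
qed

lemma trace_Ep:
  assumes s: "rep G m \<sigma>" and c: "\<chi> \<in> irr_chars G"
  shows "mat_trace (Ep G \<sigma> m \<chi>) = complex_of_real (char_dim G \<chi>) * cnj (class_inner G \<chi> (character G \<sigma>))"
proof -
  obtain d \<rho> where 1: "irrep G d \<rho>" "\<chi> = character G \<rho>" using c by (rule irr_charsE)
  have r: "rep G d \<rho>" using 1 unfolding irrep_def by auto
  let ?n = "card (carrier G)"
  let ?c = "complex_of_real (char_dim G \<chi>) / of_nat ?n"
  have sc: "\<And>g. g \<in> carrier G \<Longrightarrow> \<sigma> g \<in> carrier_mat m m" using rep_carrier[OF grp fin s] .
  have "mat_trace (Ep G \<sigma> m \<chi>) = (\<Sum>g\<in>carrier G. mat_trace ((?c * \<chi> (inv g)) \<cdot>\<^sub>m \<sigma> g))"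
    unfolding Ep_def by (rule msum_trace) (use sc in auto)
  also have "\<dots> = (\<Sum>g\<in>carrier G. ?c * (cnj (\<chi> g) * character G \<sigma> g))"
  proof (rule sum.cong[OF refl])
    fix g assume g: "g \<in> carrier G"
    have "\<chi> (inv g) = cnj (\<chi> g)" using char_inv[OF grp fin r g] 1(2) by simp
    moreover have "mat_trace (\<sigma> g) = character G \<sigma> g" using g by (simp add: character_def)
    ultimately show "mat_trace ((?c * \<chi> (inv g)) \<cdot>\<^sub>m \<sigma> g) = ?c * (cnj (\<chi> g) * character G \<sigma> g)"
      using trace_smult[OF sc[OF g]] by simp
  qed
  also have "\<dots> = complex_of_real (char_dim G \<chi>) * cnj (class_inner G \<chi> (character G \<sigma>))"
    unfolding class_inner_def by (simp add: sum_distrib_left sum_divide_distrib)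
  finally show ?thesis .
qed

lemma Re_trace_Ep:
  assumes s: "rep G m \<sigma>" and c: "\<chi> \<in> irr_chars G"
  shows "Re (mat_trace (Ep G \<sigma> m \<chi>)) = char_dim G \<chi> * Re (class_inner G \<chi> (character G \<sigma>))"
  using trace_Ep[OF s c] by simp

lemma proj_nonneg:
  assumes s: "rep G m \<sigma>" and c: "\<chi> \<in> irr_chars G"
  shows "0 \<le> char_dim G \<chi> * Re (class_inner G \<chi> (character G \<sigma>))"
proof -
  have "Ep G \<sigma> m \<chi> * Ep G \<sigma> m \<chi> = Ep G \<sigma> m \<chi>" using Ep_mult_irr[OF s c c] by simp
  then obtain k where "mat_trace (Ep G \<sigma> m \<chi>) = of_nat k" using idempotent_trace[OF Ep_carrier] by blast
  then show ?thesis using Re_trace_Ep[OF s c] by simp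
qed

lemma proj_sum_le:
  assumes s: "rep G m \<sigma>" and S: "S \<subseteq> irr_chars G" and fS: "finite S"
  shows "(\<Sum>\<chi>\<in>S. char_dim G \<chi> * Re (class_inner G \<chi> (character G \<sigma>))) \<le> real m"
proof -
  obtain k where k: "k \<le> m" and tr: "mat_trace (msum m m (Ep G \<sigma> m) S) = of_nat k"
    using idempotent_trace[OF msum_carrier ES_idem[OF s S fS]] by blast
  have "mat_trace (msum m m (Ep G \<sigma> m) S) = (\<Sum>\<chi>\<in>S. mat_trace (Ep G \<sigma> m \<chi>))"
    by (rule msum_trace) simp
  then have "(\<Sum>\<chi>\<in>S. Re (mat_trace (Ep G \<sigma> m \<chi>))) = Re (mat_trace (msum m m (Ep G \<sigma> m) S))"
    by (simp add: Re_sum)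
  then have "(\<Sum>\<chi>\<in>S. Re (mat_trace (Ep G \<sigma> m \<chi>))) = real k" using tr by simp
  moreover have "(\<Sum>\<chi>\<in>S. Re (mat_trace (Ep G \<sigma> m \<chi>))) = (\<Sum>\<chi>\<in>S. char_dim G \<chi> * Re (class_inner G \<chi> (character G \<sigma>)))"
    by (rule sum.cong[OF refl]) (use Re_trace_Ep[OF s] S in auto)
  ultimately show ?thesis using k by simp
qed

end

lemma cs_sum:
  fixes a b :: "'x \<Rightarrow> real"
  assumes fS: "finite S"
  shows "(\<Sum>i\<in>S. a i * b i) \<le> sqrt (\<Sum>i\<in>S. (a i)^2) * sqrt (\<Sum>i\<in>S. (b i)^2)"
proof -
  define A where "A = (\<Sum>i\<in>S. (a i)^2)"
  define B where "B = (\<Sum>i\<in>S. (b i)^2)"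
  have A0: "A \<ge> 0" and B0: "B \<ge> 0" unfolding A_def B_def by (auto intro: sum_nonneg)
  show ?thesis
  proof (cases "A = 0 \<or> B = 0")
    case True
    then show ?thesis
    proof
      assume "A = 0"
      then have "\<forall>i\<in>S. (a i)^2 = 0" unfolding A_def using fS by (subst (asm) sum_nonneg_eq_0_iff) auto
      then show ?thesis by simp
    next
      assume "B = 0"
      then have "\<forall>i\<in>S. (b i)^2 = 0" unfolding B_def using fS by (subst (asm) sum_nonneg_eq_0_iff) auto
      then show ?thesis by simp
    qed
  next
    case False
    define s where "s = sqrt A"
    define t where "t = sqrt B"
    have s: "s > 0" and t: "t > 0" using False A0 B0 unfolding s_def t_def by auto
    have ss: "s^2 = A" and tt: "t^2 = B" unfolding s_def t_def using A0 B0 by auto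
    have pt: "2 * s * t * (a i * b i) \<le> t^2 * (a i)^2 + s^2 * (b i)^2" for i
    proof -
      have "0 \<le> (t * a i - s * b i)^2" by simp
      then show ?thesis by (simp add: power2_eq_square algebra_simps)
    qed
    have "2 * s * t * (\<Sum>i\<in>S. a i * b i) = (\<Sum>i\<in>S. 2 * s * t * (a i * b i))" by (simp add: sum_distrib_left)
    also have "\<dots> \<le> (\<Sum>i\<in>S. t^2 * (a i)^2 + s^2 * (b i)^2)" by (rule sum_mono) (rule pt)
    also have "\<dots> = t^2 * A + s^2 * B" unfolding A_def B_def by (simp add: sum.distrib sum_distrib_left)
    also have "\<dots> = 2 * s * t * (s * t)" using ss tt by (simp add: power2_eq_square algebra_simps)
    finally have "(\<Sum>i\<in>S. a i * b i) \<le> s * t" using s t by simp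
    then show ?thesis unfolding s_def t_def A_def B_def .
  qed
qed


context
  fixes G :: "('a, 'b) monoid_scheme" (structure)
  assumes grp: "group G" and fin: "finite (carrier G)"
begin

interpretation group G by (rule grp)

lemma irrep_dim_le: assumes it: "irrep G d \<rho>" shows "d \<le> card (carrier G)"
proof -
  have r: "rep G d \<rho>" using it unfolding irrep_def by auto
  have "(cmod (character G \<rho> \<one>))^2 \<le> (\<Sum>g\<in>carrier G. (cmod (character G \<rho> g))^2)"
    by (rule member_le_sum) (use fin in auto)
  also have "\<dots> = real (card (carrier G))" by (rule char_norm[OF grp fin it])
  finally have "real (d^2) \<le> real (card (carrier G))" using character_one[OF grp fin r] by simp
  then have "d^2 \<le> card (carrier G)" by linarith
  moreover have "d \<le> d^2" by (simp add: power2_eq_square)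
  ultimately show ?thesis by simp
qed

lemma dims_finite: "finite {real d | d. \<exists>\<rho>. irrep G d \<rho>}"
proof (rule finite_subset)
  show "{real d | d. \<exists>\<rho>. irrep G d \<rho>} \<subseteq> real ` {..card (carrier G)}"
    using irrep_dim_le by auto
qed simp

lemma le_max_dim: "irrep G d \<rho> \<Longrightarrow> real d \<le> max_irrep_dim G"
  unfolding max_irrep_dim_def by (rule Max_ge[OF dims_finite]) auto

lemma P_bound:
  assumes f: "f \<ge> 0"
    and il: "irrep G dl \<rho>l" and im: "irrep G dm \<rho>m"
    and sl: "smooth G f dl \<rho>l" and sm: "smooth G f dm \<rho>m"
    and c: "\<chi> \<in> irr_chars G"
  shows "\<bar>P_tensor G (character G \<rho>l) (character G \<rho>m) \<chi>\<bar>
           \<le> max_irrep_dim G / sqrt (real (card (carrier G))) * sqrt f"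
proof -
  let ?n = "card (carrier G)"
  obtain d \<rho> where it: "irrep G d \<rho>" and ch: "\<chi> = character G \<rho>" using c by (rule irr_charsE[OF grp fin])
  have r: "rep G d \<rho>" and rl: "rep G dl \<rho>l" and rm: "rep G dm \<rho>m" and dl0: "dl > 0" and dm0: "dm > 0"
    using it il im unfolding irrep_def by auto
  have n0: "?n > 0" using fin by (auto simp: card_gt_0_iff)
  define x where "x g = cmod (character G \<rho>l g / of_nat dl)" for g
  define y where "y g = cmod (character G \<rho>m g / of_nat dm)" for g
  define z where "z g = cmod (\<chi> g)" for g
  have x0: "x g \<ge> 0" and y0: "y g \<ge> 0" and z0: "z g \<ge> 0" for g unfolding x_def y_def z_def by auto
  have cx: "cmod (character G \<rho>l g) = real dl * x g" for g
    unfolding x_def using dl0 by (simp add: norm_divide)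
  have cy: "cmod (character G \<rho>m g) = real dm * y g" for g
    unfolding y_def using dm0 by (simp add: norm_divide)
  define ci where "ci = class_inner G \<chi> (\<lambda>g. character G \<rho>l g * character G \<rho>m g)"
  have P: "P_tensor G (character G \<rho>l) (character G \<rho>m) \<chi> = real d / (real dl * real dm) * Re ci"
    unfolding P_tensor_def ci_def using char_dim_char[OF grp fin r] char_dim_char[OF grp fin rl] char_dim_char[OF grp fin rm] ch
    by simp
  have "cmod ci \<le> (\<Sum>g\<in>carrier G. cmod (\<chi> g * cnj (character G \<rho>l g * character G \<rho>m g))) / real ?n"
    unfolding ci_def class_inner_def by (simp add: norm_divide norm_sum divide_right_mono)
  also have "\<dots> = (real dl * real dm / real ?n) * (\<Sum>g\<in>carrier G. z g * (x g * y g))"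
    by (simp add: norm_mult cx cy z_def sum_distrib_left sum_divide_distrib mult_ac)
  finally have cci: "cmod ci \<le> (real dl * real dm / real ?n) * (\<Sum>g\<in>carrier G. z g * (x g * y g))" .
  have cs1: "(\<Sum>g\<in>carrier G. z g * (x g * y g)) \<le> sqrt (\<Sum>g\<in>carrier G. (z g)^2) * sqrt (\<Sum>g\<in>carrier G. (x g * y g)^2)"
    by (rule cs_sum[OF fin])
  have zz: "(\<Sum>g\<in>carrier G. (z g)^2) = real ?n" unfolding z_def ch by (rule char_norm[OF grp fin it])
  have cs2: "(\<Sum>g\<in>carrier G. (x g)^2 * (y g)^2) \<le> sqrt (\<Sum>g\<in>carrier G. ((x g)^2)^2) * sqrt (\<Sum>g\<in>carrier G. ((y g)^2)^2)"
    by (rule cs_sum[OF fin])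
  have x4: "(\<Sum>g\<in>carrier G. ((x g)^2)^2) \<le> f" using sl unfolding smooth_def x_def by (simp add: power_mult[symmetric])
  have y4: "(\<Sum>g\<in>carrier G. ((y g)^2)^2) \<le> f" using sm unfolding smooth_def y_def by (simp add: power_mult[symmetric])
  have "sqrt (\<Sum>g\<in>carrier G. ((x g)^2)^2) * sqrt (\<Sum>g\<in>carrier G. ((y g)^2)^2) \<le> sqrt f * sqrt f"
    using x4 y4 f by (intro mult_mono) (auto intro: sum_nonneg)
  also have "\<dots> = f" using f by simp
  finally have xy: "(\<Sum>g\<in>carrier G. (x g * y g)^2) \<le> f" using cs2 by (simp add: power_mult_distrib)
  have S: "(\<Sum>g\<in>carrier G. z g * (x g * y g)) \<le> sqrt (real ?n) * sqrt f"
  proof -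
    have "sqrt (\<Sum>g\<in>carrier G. (x g * y g)^2) \<le> sqrt f" using xy by simp
    then have "sqrt (real ?n) * sqrt (\<Sum>g\<in>carrier G. (x g * y g)^2) \<le> sqrt (real ?n) * sqrt f"
      by (rule mult_left_mono) simp
    then show ?thesis using cs1 zz by simp
  qed
  have "\<bar>P_tensor G (character G \<rho>l) (character G \<rho>m) \<chi>\<bar> = real d / (real dl * real dm) * \<bar>Re ci\<bar>"
    unfolding P by (simp add: abs_mult)
  also have "\<dots> \<le> real d / (real dl * real dm) * cmod ci"
    by (intro mult_left_mono abs_Re_le_cmod) auto
  also have "\<dots> \<le> real d / (real dl * real dm) * ((real dl * real dm / real ?n) * (sqrt (real ?n) * sqrt f))"
    using cci S by (intro mult_left_mono order_trans[OF cci] mult_left_mono) auto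
  also have "\<dots> = real d / sqrt (real ?n) * sqrt f"
  proof -
    have e1: "real d / (real dl * real dm) * (real dl * real dm / real ?n) = real d / real ?n"
      using dl0 dm0 by simp
    have e2: "real d / real ?n * sqrt (real ?n) = real d / sqrt (real ?n)"
    proof -
      have sn: "sqrt (real ?n) > 0" using n0 by simp
      have gen: "\<And>s::real. s > 0 \<Longrightarrow> real d * s / (s * s) = real d / s" by simp
      have "real d / real ?n * sqrt (real ?n) = real d * sqrt (real ?n) / real ?n" by simp
      also have "\<dots> = real d * sqrt (real ?n) / (sqrt (real ?n) * sqrt (real ?n))" by simp
      also have "\<dots> = real d / sqrt (real ?n)" by (rule gen[OF sn])
      finally show ?thesis .
    qed
    have "real d / (real dl * real dm) * ((real dl * real dm / real ?n) * (sqrt (real ?n) * sqrt f))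
        = (real d / (real dl * real dm) * (real dl * real dm / real ?n)) * sqrt (real ?n) * sqrt f"
      by (simp only: mult.assoc)
    also have "\<dots> = real d / sqrt (real ?n) * sqrt f" unfolding e1 e2 ..
    finally show ?thesis .
  qed
  also have "\<dots> \<le> max_irrep_dim G / sqrt (real ?n) * sqrt f"
    using le_max_dim[OF it] f by (intro mult_right_mono divide_right_mono) auto
  finally show ?thesis .
qed

end

theorem lemma1:
  fixes G :: "('a, 'b) monoid_scheme" and f :: real
    and dl dm dl' dm' :: nat and \<rho>l \<rho>m \<rho>l' \<rho>m' :: "'a \<Rightarrow> complex mat"
  assumes "group G" and "finite (carrier G)" and "f \<ge> 0"
    and "irrep G dl \<rho>l" and "irrep G dm \<rho>m" and "irrep G dl' \<rho>l'" and "irrep G dm' \<rho>m'"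
    and "smooth G f dl \<rho>l" and "smooth G f dm \<rho>m"
  shows "P_coll G (character G \<rho>l) (character G \<rho>m) (character G \<rho>l') (character G \<rho>m')
           \<le> max_irrep_dim G / sqrt (real (card (carrier G))) * sqrt f"
proof -
  note grp = assms(1) and fin = assms(2) and f = assms(3)
  note il = assms(4) and im = assms(5) and il' = assms(6) and im' = assms(7)
  let ?B = "max_irrep_dim G / sqrt (real (card (carrier G))) * sqrt f"
  let ?P = "P_tensor G (character G \<rho>l) (character G \<rho>m)"
  let ?P' = "P_tensor G (character G \<rho>l') (character G \<rho>m')"
  have B0: "?B \<ge> 0"
  proof -
    have "0 \<le> real dl" by simp
    also have "\<dots> \<le> max_irrep_dim G" by (rule le_max_dim[OF grp fin il])
    finally show ?thesis using f by simp
  qed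
  have rl': "rep G dl' \<rho>l'" and rm': "rep G dm' \<rho>m'" and d1: "dl' > 0" and d2: "dm' > 0"
    using il' im' unfolding irrep_def by auto
  define \<sigma> where "\<sigma> = tensor_rep dl' dm' \<rho>l' \<rho>m'"
  have rs: "rep G (dl' * dm') \<sigma>" unfolding \<sigma>_def by (rule tensor_rep_rep[OF grp fin rl' rm'])
  have chs: "character G \<sigma> = (\<lambda>g. character G \<rho>l' g * character G \<rho>m' g)"
    unfolding \<sigma>_def by (rule tensor_rep_char[OF grp fin rl' rm'])
  have P'eq: "?P' \<chi> = char_dim G \<chi> * Re (class_inner G \<chi> (character G \<sigma>)) / real (dl' * dm')" for \<chi>
    unfolding P_tensor_def chs using char_dim_char[OF grp fin rl'] char_dim_char[OF grp fin rm'] by simp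
  have P'0: "?P' \<chi> \<ge> 0" if "\<chi> \<in> irr_chars G" for \<chi>
    unfolding P'eq using proj_nonneg[OF grp fin rs that] by simp
  show ?thesis
  proof (cases "finite (irr_chars G)")
    case False
    then show ?thesis unfolding P_coll_def using B0 by simp
  next
    case True
    have "P_coll G (character G \<rho>l) (character G \<rho>m) (character G \<rho>l') (character G \<rho>m')
        = (\<Sum>\<chi>\<in>irr_chars G. ?P \<chi> * ?P' \<chi>)" unfolding P_coll_def ..
    also have "\<dots> \<le> (\<Sum>\<chi>\<in>irr_chars G. ?B * ?P' \<chi>)"
    proof (rule sum_mono)
      fix \<chi> assume c: "\<chi> \<in> irr_chars G"
      have "?P \<chi> * ?P' \<chi> \<le> \<bar>?P \<chi>\<bar> * ?P' \<chi>" using P'0[OF c] by (intro mult_right_mono) auto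
      also have "\<dots> \<le> ?B * ?P' \<chi>"
        using P_bound[OF grp fin f il im assms(8) assms(9) c] P'0[OF c] by (intro mult_right_mono) auto
      finally show "?P \<chi> * ?P' \<chi> \<le> ?B * ?P' \<chi>" .
    qed
    also have "\<dots> = ?B * (\<Sum>\<chi>\<in>irr_chars G. ?P' \<chi>)" by (simp add: sum_distrib_left)
    also have "\<dots> \<le> ?B * 1"
    proof (rule mult_left_mono[OF _ B0])
      have "(\<Sum>\<chi>\<in>irr_chars G. ?P' \<chi>) = (\<Sum>\<chi>\<in>irr_chars G. char_dim G \<chi> * Re (class_inner G \<chi> (character G \<sigma>))) / real (dl' * dm')"
        unfolding P'eq by (simp add: sum_divide_distrib)
      also have "\<dots> \<le> real (dl' * dm') / real (dl' * dm')"
        using proj_sum_le[OF grp fin rs order_refl True] by (intro divide_right_mono) auto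
      also have "\<dots> = 1" using d1 d2 by simp
      finally show "(\<Sum>\<chi>\<in>irr_chars G. ?P' \<chi>) \<le> 1" .
    qed
    finally show ?thesis by simp
  qed
qed


end
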